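(* Let $\mathcal H$ be a complex Hilbert space and let $T\in\mathcal B(\mathcal H)$ satisfy $\sigma_{ap}(T)\subseteq\partial\mathbb D$ and be such that $T'|_{\mathcal H'_u}$ is hyponormal, where $T'=T(T^*T)^{-1}$ and $\mathcal H'_u:=\bigcap_{n\ge0}\mathcal R(T'^n)$. Then: (i) if $T$ is invertible, then $T$ is unitary; (ii) if $T$ is analytic, then $T$ is completely non-normal.
   Context: $\sigma_{ap}(T)$ is the approximate point spectrum; the condition $\sigma_{ap}(T)\subseteq\partial\mathbb D$ implies $0\notin\sigma_{ap}(T)$, so $T^*T$ is invertible and $T'$ is defined. $\mathcal H'_u$ is invariant under $T'$, and $T'|_{\mathcal H'_u}$ denotes the restriction. $A$ is hyponormal if $A^*A-AA^*\ge0$. $T$ is analytic if $\bigcap_n\mathcal R(T^n)=\{0\}$; completely non-normal if no nonzero closed subspace reduces $T$ to a normal operator. *)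

theory Defs
  imports "HOL-Analysis.Analysis"
begin

text \<open>Complex Hilbert spaces (not available in the distribution): a complete real normed
  vector space with a complex scalar multiplication extending the real one and a complex
  inner product (conjugate-linear in the first argument) inducing the norm.\<close>

class chilbert = real_normed_vector + complete_space +
  fixes cscale :: "complex \<Rightarrow> 'a \<Rightarrow> 'a" (infixr "*\<^sub>C" 75)
    and cinner :: "'a \<Rightarrow> 'a \<Rightarrow> complex"
  assumes cscale_add_right: "a *\<^sub>C (x + y) = a *\<^sub>C x + a *\<^sub>C y"
    and cscale_add_left: "(a + b) *\<^sub>C x = a *\<^sub>C x + b *\<^sub>C x"
    and cscale_cscale: "a *\<^sub>C (b *\<^sub>C x) = (a * b) *\<^sub>C x"
    and cscale_one: "1 *\<^sub>C x = x"
    and cscale_of_real: "complex_of_real r *\<^sub>C x = r *\<^sub>R x"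
    and cinner_cnj: "cinner x y = cnj (cinner y x)"
    and cinner_add_left: "cinner (x + y) z = cinner x z + cinner y z"
    and cinner_cscale_left: "cinner (a *\<^sub>C x) y = cnj a * cinner x y"
    and cinner_nonneg: "0 \<le> Re (cinner x x)"
    and cinner_eq_zero: "cinner x x = 0 \<longleftrightarrow> x = 0"
    and norm_cinner: "norm x = sqrt (Re (cinner x x))"

definition bounded_clinear :: "('a::chilbert \<Rightarrow> 'a) \<Rightarrow> bool" where
  "bounded_clinear T \<longleftrightarrow> (\<forall>x y. T (x + y) = T x + T y) \<and> (\<forall>a x. T (a *\<^sub>C x) = a *\<^sub>C T x)
     \<and> (\<exists>K. \<forall>x. norm (T x) \<le> norm x * K)"

definition is_adjoint :: "('a::chilbert \<Rightarrow> 'a) \<Rightarrow> ('a \<Rightarrow> 'a) \<Rightarrow> bool" where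
  "is_adjoint T S \<longleftrightarrow> (\<forall>x y. cinner (T x) y = cinner x (S y))"

definition adj :: "('a::chilbert \<Rightarrow> 'a) \<Rightarrow> ('a \<Rightarrow> 'a)" where
  "adj T = (SOME S. is_adjoint T S)"

definition invertible_op :: "('a::chilbert \<Rightarrow> 'a) \<Rightarrow> bool" where
  "invertible_op T \<longleftrightarrow> (\<exists>S. bounded_clinear S \<and> S \<circ> T = id \<and> T \<circ> S = id)"

definition op_inv :: "('a::chilbert \<Rightarrow> 'a) \<Rightarrow> ('a \<Rightarrow> 'a)" where
  "op_inv T = (SOME S. bounded_clinear S \<and> S \<circ> T = id \<and> T \<circ> S = id)"

definition ap_spec :: "('a::chilbert \<Rightarrow> 'a) \<Rightarrow> complex set" where
  "ap_spec T = {l. \<exists>x::nat \<Rightarrow> 'a. (\<forall>n. norm (x n) = 1) \<and>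
                     (\<lambda>n. T (x n) - l *\<^sub>C x n) \<longlonglongrightarrow> 0}"

definition Tprime :: "('a::chilbert \<Rightarrow> 'a) \<Rightarrow> ('a \<Rightarrow> 'a)" where
  "Tprime T = T \<circ> op_inv (adj T \<circ> T)"

definition Hu' :: "('a::chilbert \<Rightarrow> 'a) \<Rightarrow> 'a set" where
  "Hu' T = (\<Inter>n. range (Tprime T ^^ n))"

definition unitary_op :: "('a::chilbert \<Rightarrow> 'a) \<Rightarrow> bool" where
  "unitary_op T \<longleftrightarrow> adj T \<circ> T = id \<and> T \<circ> adj T = id"

definition csubspace :: "'a::chilbert set \<Rightarrow> bool" where
  "csubspace M \<longleftrightarrow> 0 \<in> M \<and> (\<forall>x\<in>M. \<forall>y\<in>M. x + y \<in> M) \<and> (\<forall>a. \<forall>x\<in>M. a *\<^sub>C x \<in> M)"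

definition orth :: "'a::chilbert set \<Rightarrow> 'a set" where
  "orth M = {y. \<forall>x\<in>M. cinner x y = 0}"

definition reduces :: "'a::chilbert set \<Rightarrow> ('a \<Rightarrow> 'a) \<Rightarrow> bool" where
  "reduces M T \<longleftrightarrow> (\<forall>x\<in>M. T x \<in> M) \<and> (\<forall>x\<in>orth M. T x \<in> orth M)"

definition is_adjoint_on :: "'a::chilbert set \<Rightarrow> ('a \<Rightarrow> 'a) \<Rightarrow> ('a \<Rightarrow> 'a) \<Rightarrow> bool" where
  "is_adjoint_on M A S \<longleftrightarrow> (\<forall>x\<in>M. S x \<in> M) \<and> (\<forall>x\<in>M. \<forall>y\<in>M. cinner (A x) y = cinner x (S y))"

definition hyponormal_on :: "'a::chilbert set \<Rightarrow> ('a \<Rightarrow> 'a) \<Rightarrow> bool" where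
  "hyponormal_on M A \<longleftrightarrow> (\<exists>S. is_adjoint_on M A S \<and>
     (\<forall>x\<in>M. Im (cinner x (S (A x) - A (S x))) = 0 \<and> 0 \<le> Re (cinner x (S (A x) - A (S x)))))"

definition normal_on :: "'a::chilbert set \<Rightarrow> ('a \<Rightarrow> 'a) \<Rightarrow> bool" where
  "normal_on M A \<longleftrightarrow> (\<exists>S. is_adjoint_on M A S \<and> (\<forall>x\<in>M. S (A x) = A (S x)))"

definition analytic_op :: "('a::chilbert \<Rightarrow> 'a) \<Rightarrow> bool" where
  "analytic_op T \<longleftrightarrow> (\<Inter>n. range (T ^^ n)) = {0}"

definition completely_nonnormal :: "('a::chilbert \<Rightarrow> 'a) \<Rightarrow> bool" where
  "completely_nonnormal T \<longleftrightarrow>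
     \<not> (\<exists>M. csubspace M \<and> closed M \<and> M \<noteq> {0} \<and> reduces M T \<and> normal_on M T)"

end

theory Submission
  imports Defs "HOL-Complex_Analysis.Cauchy_Integral_Formula"
begin




lemma cinner_add_right: "cinner x (y + z) = cinner x y + cinner (x::'a::chilbert) z"
  by (metis cinner_cnj cinner_add_left complex_cnj_add)

lemma cinner_cscale_right: "cinner x (a *\<^sub>C y) = a * cinner (x::'a::chilbert) y"
  by (metis cinner_cnj cinner_cscale_left complex_cnj_cnj complex_cnj_mult)

lemma cinner_zero_left[simp]: "cinner 0 (y::'a::chilbert) = 0"
  by (metis add_cancel_right_right add_0 cinner_add_left)

lemma cinner_zero_right[simp]: "cinner (x::'a::chilbert) 0 = 0"
  by (metis cinner_cnj cinner_zero_left complex_cnj_zero)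

lemma cinner_minus_left: "cinner (- x) (y::'a::chilbert) = - cinner x y"
  by (metis add_eq_0_iff cinner_add_left cinner_zero_left add.right_inverse)

lemma cinner_minus_right: "cinner x (- y::'a::chilbert) = - cinner x y"
  by (metis add_eq_0_iff cinner_add_right cinner_zero_right add.right_inverse)

lemma cinner_diff_left: "cinner (x - z) (y::'a::chilbert) = cinner x y - cinner z y"
  by (simp only: diff_conv_add_uminus cinner_add_left cinner_minus_left)

lemma cinner_diff_right: "cinner x (y - z::'a::chilbert) = cinner x y - cinner x z"
  by (simp only: diff_conv_add_uminus cinner_add_right cinner_minus_right)

lemma cscale_zero_left[simp]: "0 *\<^sub>C (x::'a::chilbert) = 0"
  by (metis cscale_of_real of_real_0 scale_zero_left)

lemma cscale_zero_right[simp]: "a *\<^sub>C (0::'a::chilbert) = 0"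
  by (metis add_cancel_right_right add_0 cscale_add_right)

lemma cscale_minus_right: "a *\<^sub>C (- x::'a::chilbert) = - (a *\<^sub>C x)"
  by (metis add_eq_0_iff cscale_add_right cscale_zero_right add.right_inverse)

lemma cscale_minus_left: "(- a) *\<^sub>C (x::'a::chilbert) = - (a *\<^sub>C x)"
  by (metis add_eq_0_iff cscale_add_left cscale_zero_left add.right_inverse)

lemma cscale_diff_right: "a *\<^sub>C (x - y::'a::chilbert) = a *\<^sub>C x - a *\<^sub>C y"
  by (simp only: diff_conv_add_uminus cscale_add_right cscale_minus_right)

lemma cscale_diff_left: "(a - b) *\<^sub>C (x::'a::chilbert) = a *\<^sub>C x - b *\<^sub>C x"
  by (metis cscale_add_left cscale_minus_left diff_conv_add_uminus)

lemma cinner_self_Im: "Im (cinner x (x::'a::chilbert)) = 0"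
  by (metis cinner_cnj cnj.sel(2) equation_minus_iff zero_complex.simps(2) neg_equal_zero)

lemma cinner_self_Re: "Re (cinner x (x::'a::chilbert)) = (norm x)^2"
  by (simp add: cinner_nonneg norm_cinner)

lemma cinner_self: "cinner x (x::'a::chilbert) = complex_of_real ((norm x)^2)"
  by (simp add: complex_eq_iff cinner_self_Im cinner_self_Re)

lemma norm_cscale: "norm (a *\<^sub>C (x::'a::chilbert)) = cmod a * norm x"
proof -
  have "complex_of_real ((norm (a *\<^sub>C x))^2) = cnj a * a * complex_of_real ((norm x)^2)"
    by (metis cinner_self cinner_cscale_left cinner_cscale_right mult.assoc of_real_power)
  also have "cnj a * a = complex_of_real ((cmod a)^2)"
    by (metis complex_norm_square mult.commute)
  finally have "(norm (a *\<^sub>C x))^2 = ((cmod a) * norm x)^2"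
    by (metis of_real_eq_iff of_real_mult power_mult_distrib)
  then show ?thesis by (simp add: power2_eq_iff_nonneg)
qed

lemma cinner_same_imp_eq: "(\<And>x. cinner x y = cinner x z) \<Longrightarrow> y = (z::'a::chilbert)"
  by (metis cinner_diff_right cinner_eq_zero diff_self eq_iff_diff_eq_0)

lemma cauchy_schwarz: "cmod (cinner x y) \<le> norm x * norm (y::'a::chilbert)"
proof (cases "x = 0")
  case True then show ?thesis by simp
next
  case False
  define t where "t = cinner x y / complex_of_real ((norm x)^2)"
  have nx: "norm x > 0" using False by simp
  have tx: "t * cinner x x = cinner x y"
    using nx by (simp add: t_def cinner_self)
  have e1: "cinner (y - t *\<^sub>C x) (y - t *\<^sub>C x) = cinner y y - t * cinner y x - cnj t * cinner x y + cnj t * (t * cinner x x)"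
    by (simp add: cinner_diff_left cinner_diff_right cinner_cscale_left cinner_cscale_right algebra_simps)
  have e2: "t * cinner y x = complex_of_real ((cmod (cinner x y))^2 / (norm x)^2)"
  proof -
    have "t * cinner y x = (cinner x y * cnj (cinner x y)) / complex_of_real ((norm x)^2)"
      by (simp add: t_def cinner_cnj[of y x])
    also have "\<dots> = complex_of_real ((cmod (cinner x y))^2 / (norm x)^2)"
      by (simp only: complex_norm_square of_real_divide)
    finally show ?thesis .
  qed
  have "cinner (y - t *\<^sub>C x) (y - t *\<^sub>C x) = complex_of_real ((norm y)^2 - (cmod (cinner x y))^2 / (norm x)^2)"
    unfolding e1 tx e2 by (simp add: cinner_self)
  then have "0 \<le> (norm y)^2 - (cmod (cinner x y))^2 / (norm x)^2"
    using cinner_nonneg[of "y - t *\<^sub>C x"] by simp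
  then have "(cmod (cinner x y))^2 \<le> (norm x * norm y)^2"
    using nx by (simp add: field_simps power_mult_distrib del: of_real_power)
  then show ?thesis using power2_le_imp_le by fastforce
qed



lemma norm_sq_add: "(norm (a + b::'a::chilbert))^2 = (norm a)^2 + (norm b)^2 + 2 * Re (cinner a b)"
proof -
  have "cinner (a + b) (a + b) = cinner a a + cinner b b + (cinner a b + cnj (cinner a b))"
    by (simp add: cinner_add_left cinner_add_right cinner_cnj[of b a])
  then have "Re (cinner (a + b) (a + b)) = Re (cinner a a) + Re (cinner b b) + 2 * Re (cinner a b)"
    by simp
  then show ?thesis by (simp add: cinner_self_Re)
qed

lemma parallelogram: "(norm (a - b::'a::chilbert))^2 + (norm (a + b))^2 = 2 * (norm a)^2 + 2 * (norm b)^2"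
proof -
  have "(norm (a - b))^2 = (norm a)^2 + (norm b)^2 + 2 * Re (cinner a (- b))"
    using norm_sq_add[of a "-b"] by simp
  then show ?thesis using norm_sq_add[of a b] by (simp add: cinner_minus_right)
qed

lemma proj_identity:
  assumes "k \<noteq> 0"
  shows "(norm (z - (cinner k z / complex_of_real ((norm k)^2)) *\<^sub>C k))^2
     = (norm z)^2 - (cmod (cinner k z))^2 / (norm (k::'a::chilbert))^2"
proof -
  define t where "t = cinner k z / complex_of_real ((norm k)^2)"
  have nx: "norm k > 0" using assms by simp
  have tx: "t * cinner k k = cinner k z"
    using nx by (simp add: t_def cinner_self)
  have e1: "cinner (z - t *\<^sub>C k) (z - t *\<^sub>C k) = cinner z z - t * cinner z k - cnj t * cinner k z + cnj t * (t * cinner k k)"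
    by (simp add: cinner_diff_left cinner_diff_right cinner_cscale_left cinner_cscale_right algebra_simps)
  have e2: "t * cinner z k = complex_of_real ((cmod (cinner k z))^2 / (norm k)^2)"
  proof -
    have "t * cinner z k = (cinner k z * cnj (cinner k z)) / complex_of_real ((norm k)^2)"
      by (simp add: t_def cinner_cnj[of z k])
    also have "\<dots> = complex_of_real ((cmod (cinner k z))^2 / (norm k)^2)"
      by (simp only: complex_norm_square of_real_divide)
    finally show ?thesis .
  qed
  have "cinner (z - t *\<^sub>C k) (z - t *\<^sub>C k) = complex_of_real ((norm z)^2 - (cmod (cinner k z))^2 / (norm k)^2)"
    unfolding e1 tx e2 by (simp add: cinner_self)
  then have "Re (cinner (z - t *\<^sub>C k) (z - t *\<^sub>C k)) = (norm z)^2 - (cmod (cinner k z))^2 / (norm k)^2"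
    by simp
  then show ?thesis unfolding t_def[symmetric] by (simp add: cinner_self_Re)
qed

lemma csubspace_diff: "csubspace K \<Longrightarrow> x \<in> K \<Longrightarrow> y \<in> K \<Longrightarrow> x - y \<in> K"
  unfolding csubspace_def
  by (metis cscale_minus_left cscale_one diff_conv_add_uminus)

lemma projection_exists:
  fixes K :: "'a::chilbert set"
  assumes sub: "csubspace K" and cl: "closed K"
  shows "\<exists>p\<in>K. \<forall>k\<in>K. cinner k (y - p) = 0"
proof -
  let ?D = "(\<lambda>k. norm (y - k)) ` K"
  define d where "d = Inf ?D"
  have K0: "0 \<in> K" using sub by (simp add: csubspace_def)
  have bdd: "bdd_below ?D" by (rule bdd_belowI[of _ 0]) auto
  have dle: "\<And>k. k \<in> K \<Longrightarrow> d \<le> norm (y - k)"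
    unfolding d_def by (rule cInf_lower) (use bdd in auto)
  have d0: "0 \<le> d" unfolding d_def by (rule cInf_greatest) (use K0 in auto)
  have "\<forall>n. \<exists>k\<in>K. norm (y - k) < d + inverse (real (Suc n))"
  proof
    fix n
    have "Inf ?D < d + inverse (real (Suc n))" unfolding d_def by simp
    then show "\<exists>k\<in>K. norm (y - k) < d + inverse (real (Suc n))"
      using K0 by (subst (asm) cInf_less_iff) (auto simp: bdd)
  qed
  then obtain ks where ksK: "\<And>n. ks n \<in> K" and ksd: "\<And>n. norm (y - ks n) < d + inverse (real (Suc n))"
    by metis
  define e where "e n = inverse (real (Suc n))" for n
  have e0: "0 < e n" "e n \<le> 1" for n by (auto simp: e_def field_simps)
  have sq: "(norm (y - ks n))^2 \<le> d^2 + (2*d+1) * e n" for n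
  proof -
    have "(norm (y - ks n))^2 \<le> (d + e n)^2"
      using ksd[of n] by (intro power_mono) (auto simp: e_def)
    also have "\<dots> = d^2 + (2*d + e n) * e n" by (simp add: power2_eq_square algebra_simps)
    also have "\<dots> \<le> d^2 + (2*d+1) * e n" using e0[of n] d0 by (intro add_left_mono mult_right_mono) auto
    finally show ?thesis .
  qed
  have par: "(norm (ks n - ks m))^2 \<le> 2*(2*d+1) * (e n + e m)" for n m
  proof -
    have mid: "(1/2::complex) *\<^sub>C (ks n + ks m) \<in> K"
      using sub ksK unfolding csubspace_def by auto
    have "(norm ((y - ks n) + (y - ks m)))^2 = (norm (2 *\<^sub>C (y - (1/2::complex) *\<^sub>C (ks n + ks m))))^2"
    proof -
      have "(y - ks n) + (y - ks m) = 2 *\<^sub>C (y - (1/2::complex) *\<^sub>C (ks n + ks m))"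
      proof -
        have a: "(2::complex) *\<^sub>C (y - (1/2::complex) *\<^sub>C (ks n + ks m)) = 2 *\<^sub>C y - (ks n + ks m)"
          by (simp add: cscale_diff_right cscale_cscale cscale_one)
        have b: "(2::complex) *\<^sub>C y = y + y" using cscale_add_left[of 1 1 y] by (simp add: cscale_one)
        show ?thesis unfolding a b by (simp add: algebra_simps)
      qed
      then show ?thesis by simp
    qed
    also have "\<dots> = 4 * (norm (y - (1/2::complex) *\<^sub>C (ks n + ks m)))^2"
      by (simp add: norm_cscale power2_eq_square)
    finally have "(norm ((y - ks n) + (y - ks m)))^2 \<ge> 4 * d^2"
      using dle[OF mid] d0 by (simp add: power_mono)
    moreover have "(norm (ks m - ks n))^2 + (norm ((y - ks n) + (y - ks m)))^2
        = 2 * (norm (y - ks n))^2 + 2 * (norm (y - ks m))^2"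
      using parallelogram[of "y - ks n" "y - ks m"] by simp
    ultimately have "(norm (ks m - ks n))^2 \<le> 2 * (norm (y - ks n))^2 + 2 * (norm (y - ks m))^2 - 4 * d^2"
      by linarith
    also have "\<dots> \<le> 2*(2*d+1) * (e n + e m)" using sq[of n] sq[of m] by (simp add: algebra_simps)
    finally show ?thesis by (simp add: norm_minus_commute)
  qed
  have "Cauchy ks"
  proof (rule metric_CauchyI)
    fix eps :: real assume "eps > 0"
    define c where "c = 4*(2*d+1)"
    have c0: "c > 0" using d0 by (simp add: c_def)
    obtain M where M: "inverse (real (Suc M)) < eps^2 / c"
      using reals_Archimedean \<open>eps > 0\<close> c0 by (metis divide_pos_pos zero_less_power)
    show "\<exists>M. \<forall>m\<ge>M. \<forall>n\<ge>M. dist (ks m) (ks n) < eps"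
    proof (intro exI allI impI)
      fix m n assume "M \<le> m" "M \<le> n"
      have em: "e m \<le> inverse (real (Suc M))" "e n \<le> inverse (real (Suc M))"
        using \<open>M \<le> m\<close> \<open>M \<le> n\<close> by (auto simp: e_def intro!: le_imp_inverse_le)
      have "(dist (ks m) (ks n))^2 \<le> 2*(2*d+1) * (e m + e n)" using par[of m n] by (simp add: dist_norm)
      also have "\<dots> \<le> 2*(2*d+1) * (2 * inverse (real (Suc M)))"
        using em d0 by (intro mult_left_mono) auto
      also have "\<dots> = c * inverse (real (Suc M))" by (simp add: c_def)
      also have "\<dots> < eps^2" using M c0 by (simp add: field_simps)
      finally show "dist (ks m) (ks n) < eps"
        using \<open>eps > 0\<close> by (meson power_less_imp_less_base less_eq_real_def zero_le_dist)
    qed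
  qed
  then obtain p where lim: "ks \<longlonglongrightarrow> p" using Cauchy_convergent convergent_def by blast
  have pK: "p \<in> K" using closed_sequentially[OF cl] ksK lim by blast
  have min: "norm (y - p) \<le> norm (y - k)" if "k \<in> K" for k
  proof -
    have "norm (y - p) \<le> d"
    proof (rule LIMSEQ_le)
      show "(\<lambda>n. norm (y - ks n)) \<longlonglongrightarrow> norm (y - p)" by (intro tendsto_intros lim)
      show "(\<lambda>n. d + e n) \<longlonglongrightarrow> d" unfolding e_def
        using tendsto_add[OF tendsto_const LIMSEQ_inverse_real_of_nat] by simp
      show "\<exists>N. \<forall>n\<ge>N. norm (y - ks n) \<le> d + e n" using ksd by (auto simp: e_def less_imp_le)
    qed
    then show ?thesis using dle[OF that] by simp
  qed
  have "\<forall>k\<in>K. cinner k (y - p) = 0"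
  proof
    fix k assume kK: "k \<in> K"
    show "cinner k (y - p) = 0"
    proof (rule ccontr)
      assume ne: "cinner k (y - p) \<noteq> 0"
      then have k0: "k \<noteq> 0" by auto
      let ?t = "cinner k (y - p) / complex_of_real ((norm k)^2)"
      have "p + ?t *\<^sub>C k \<in> K" using sub kK pK unfolding csubspace_def by auto
      then have "norm (y - p) \<le> norm (y - (p + ?t *\<^sub>C k))" by (rule min)
      also have "y - (p + ?t *\<^sub>C k) = (y - p) - ?t *\<^sub>C k" by simp
      finally have "(norm (y - p))^2 \<le> (norm ((y - p) - ?t *\<^sub>C k))^2"
        by (simp add: power_mono)
      also have "\<dots> = (norm (y - p))^2 - (cmod (cinner k (y - p)))^2 / (norm k)^2"
        by (rule proj_identity[OF k0])
      finally have "(cmod (cinner k (y - p)))^2 / (norm k)^2 \<le> 0" by simp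
      moreover have "(cmod (cinner k (y - p)))^2 / (norm k)^2 > 0" using ne k0 by simp
      ultimately show False by simp
    qed
  qed
  then show ?thesis using pK by blast
qed



lemma bclin_add: "bounded_clinear X \<Longrightarrow> X (x + y) = X x + X y"
  unfolding bounded_clinear_def by blast
lemma bclin_scale: "bounded_clinear X \<Longrightarrow> X (a *\<^sub>C x) = a *\<^sub>C X x"
  unfolding bounded_clinear_def by blast
lemma bclin_bound: "bounded_clinear X \<Longrightarrow> \<exists>K>0. \<forall>x. norm (X x) \<le> K * norm x"
  unfolding bounded_clinear_def
  by (metis (no_types, opaque_lifting) dual_order.trans gt_ex less_eq_real_def linorder_not_less
      mult.commute mult_right_mono norm_ge_zero)
lemma bclin_zero: "bounded_clinear X \<Longrightarrow> X 0 = 0"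
  by (metis cscale_zero_left bclin_scale)
lemma bclin_minus: "bounded_clinear X \<Longrightarrow> X (- x) = - X x"
  by (metis add_eq_0_iff bclin_add bclin_zero add.right_inverse)
lemma bclin_diff: "bounded_clinear X \<Longrightarrow> X (x - y) = X x - X y"
  by (simp only: diff_conv_add_uminus bclin_add bclin_minus)

lemma bclin_bl: "bounded_clinear X \<Longrightarrow> bounded_linear X"
proof -
  assume b: "bounded_clinear X"
  then obtain K where K: "\<forall>x. norm (X x) \<le> K * norm x" using bclin_bound by blast
  show ?thesis
  proof (rule bounded_linear_intro[of X K])
    show "X (x + y) = X x + X y" for x y using b by (rule bclin_add)
    show "X (r *\<^sub>R x) = r *\<^sub>R X x" for r x using bclin_scale[OF b, of "complex_of_real r" x]
      by (simp add: cscale_of_real)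
    show "norm (X x) \<le> norm x * K" for x using K by (simp add: mult.commute)
  qed
qed

lemma bclinI:
  assumes "\<And>x y. X (x + y) = X x + X y" "\<And>a x. X (a *\<^sub>C x) = a *\<^sub>C X x" "\<And>x. norm (X x) \<le> K * norm x"
  shows "bounded_clinear X"
  unfolding bounded_clinear_def using assms by (metis mult.commute)

lemma bclin_comp: "bounded_clinear X \<Longrightarrow> bounded_clinear Y \<Longrightarrow> bounded_clinear (X \<circ> Y)"
proof -
  assume a: "bounded_clinear X" "bounded_clinear Y"
  then obtain K L where K: "K > 0" "\<forall>x. norm (X x) \<le> K * norm x" and L: "\<forall>x. norm (Y x) \<le> L * norm x"
    using bclin_bound by metis
  show ?thesis
  proof (rule bclinI[where K="K*L"])
    show "(X \<circ> Y) (x + y) = (X \<circ> Y) x + (X \<circ> Y) y" for x y by (simp add: bclin_add a)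
    show "(X \<circ> Y) (c *\<^sub>C x) = c *\<^sub>C (X \<circ> Y) x" for c x by (simp add: bclin_scale a)
    show "norm ((X \<circ> Y) x) \<le> K * L * norm x" for x
      using K(2)[rule_format, of "Y x"] L[rule_format, of x] K(1)
      by (simp add: mult.assoc) (meson mult_left_mono order_trans less_imp_le)
  qed
qed

lemma bclin_id: "bounded_clinear id"
  by (rule bclinI[where K=1]) auto

lemma bclin_funpow: "bounded_clinear X \<Longrightarrow> bounded_clinear (X ^^ n)"
  by (induction n) (auto simp: bclin_id bclin_comp)

lemma bclin_shift: "bounded_clinear X \<Longrightarrow> bounded_clinear (\<lambda>x. X x - mu *\<^sub>C x)"
proof -
  assume a: "bounded_clinear X"
  then obtain K where K: "\<forall>x. norm (X x) \<le> K * norm x" using bclin_bound by metis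
  show ?thesis
  proof (rule bclinI[where K="K + cmod mu"])
    show "X (x + y) - mu *\<^sub>C (x + y) = (X x - mu *\<^sub>C x) + (X y - mu *\<^sub>C y)" for x y
      by (simp add: bclin_add a cscale_add_right)
    show "X (c *\<^sub>C x) - mu *\<^sub>C (c *\<^sub>C x) = c *\<^sub>C (X x - mu *\<^sub>C x)" for c x
      by (simp add: bclin_scale a cscale_diff_right cscale_cscale mult.commute)
    show "norm (X x - mu *\<^sub>C x) \<le> (K + cmod mu) * norm x" for x
      using norm_triangle_ineq4[of "X x" "mu *\<^sub>C x"] K by (simp add: norm_cscale distrib_right)
        (smt (verit))
  qed
qed

lemma riesz:
  fixes f :: "'a::chilbert \<Rightarrow> complex"
  assumes add: "\<And>x y. f (x + y) = f x + f y" and sc: "\<And>a x. f (a *\<^sub>C x) = cnj a * f x"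
    and bd: "\<And>x. cmod (f x) \<le> C * norm x" and C0: "0 \<le> C"
  shows "\<exists>z. \<forall>x. f x = cinner x z"
proof -
  have f0: "f 0 = 0" using sc[of 0 0] by simp
  have fdiff: "f (x - y) = f x - f y" for x y
    using add[of x "(-1) *\<^sub>C y"] sc[of "-1" y] by (simp add: cscale_minus_left cscale_one)
  have lip: "C-lipschitz_on UNIV f"
    unfolding lipschitz_on_def using C0 bd by (simp add: dist_norm fdiff[symmetric])
  let ?N = "{x. f x = 0}"
  have clN: "closed ?N"
    using closed_Collect_eq[OF lipschitz_on_continuous_on[OF lip] continuous_on_const] .
  have subN: "csubspace ?N" unfolding csubspace_def using f0 add sc by auto
  show ?thesis
  proof (cases "\<forall>x. f x = 0")
    case True then show ?thesis by (intro exI[of _ 0]) simp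
  next
    case False
    then obtain u where u: "f u \<noteq> 0" by blast
    obtain p where pN: "p \<in> ?N" and orth: "\<forall>k\<in>?N. cinner k (u - p) = 0"
      using projection_exists[OF subN clN] by blast
    define w where "w = u - p"
    have fw: "f w = f u" using pN by (simp add: w_def fdiff)
    have w0: "w \<noteq> 0" using fw u f0 by auto
    have nw: "norm w > 0" using w0 by simp
    define z where "z = (f w / complex_of_real ((norm w)^2)) *\<^sub>C w"
    have "f x = cinner x z" for x
    proof -
      define a where "a = cnj (f x / f w)"
      have "f (x - a *\<^sub>C w) = 0" using u fw by (simp add: fdiff sc a_def)
      then have "cinner (x - a *\<^sub>C w) w = 0" using orth by (simp add: w_def)
      then have "cinner x w = cnj a * cinner w w"
        by (simp add: cinner_diff_left cinner_cscale_left)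
      then have "cinner x w = (f x / f w) * complex_of_real ((norm w)^2)"
        by (simp add: a_def cinner_self)
      then show ?thesis using nw u fw
        by (simp add: z_def cinner_cscale_right field_simps)
    qed
    then show ?thesis by blast
  qed
qed

lemma adjoint_exists:
  assumes X: "bounded_clinear X"
  shows "\<exists>Y. is_adjoint X Y"
proof -
  obtain K where K: "K > 0" "\<forall>x. norm (X x) \<le> K * norm x" using bclin_bound[OF X] by blast
  have "\<forall>y. \<exists>z. \<forall>x. cinner (X x) y = cinner x z"
  proof
    fix y
    show "\<exists>z. \<forall>x. cinner (X x) y = cinner x z"
    proof (rule riesz[where C="K * norm y"])
      show "cinner (X (a + b)) y = cinner (X a) y + cinner (X b) y" for a b
        by (simp add: bclin_add[OF X] cinner_add_left)
      show "cinner (X (a *\<^sub>C b)) y = cnj a * cinner (X b) y" for a b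
        by (simp add: bclin_scale[OF X] cinner_cscale_left)
      show "cmod (cinner (X x) y) \<le> K * norm y * norm x" for x
        using cauchy_schwarz[of "X x" y] K
        by (smt (verit, ccfv_SIG) mult.commute mult.left_commute mult_right_mono norm_ge_zero)
      show "0 \<le> K * norm y" using K by simp
    qed
  qed
  then show ?thesis unfolding is_adjoint_def by metis
qed

lemma adj_is_adjoint: "bounded_clinear X \<Longrightarrow> is_adjoint X (adj X)"
  unfolding adj_def using adjoint_exists by (metis someI_ex)

lemma adj_sym: "is_adjoint X Y \<Longrightarrow> is_adjoint Y X"
  unfolding is_adjoint_def by (metis cinner_cnj)

lemma adj_comp: "is_adjoint X Y \<Longrightarrow> is_adjoint U V \<Longrightarrow> is_adjoint (X \<circ> U) (V \<circ> Y)"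
  unfolding is_adjoint_def by simp

lemma adj_id: "is_adjoint id id"
  unfolding is_adjoint_def by simp

lemma adj_funpow: "is_adjoint X Y \<Longrightarrow> is_adjoint (X ^^ n) (Y ^^ n)"
proof (induction n)
  case 0 then show ?case by (simp add: is_adjoint_def)
next
  case (Suc n)
  have "is_adjoint (X \<circ> X ^^ n) (Y ^^ n \<circ> Y)" by (rule adj_comp[OF Suc.prems Suc.IH[OF Suc.prems]])
  then show ?case by (metis funpow.simps(2) funpow_Suc_right)
qed

lemma adj_unique: "is_adjoint X Y \<Longrightarrow> is_adjoint X Z \<Longrightarrow> Y = Z"
  unfolding is_adjoint_def by (metis cinner_same_imp_eq ext)

lemma adj_add: "is_adjoint X Y \<Longrightarrow> Y (a + b) = Y a + Y b"
  unfolding is_adjoint_def by (metis cinner_add_right cinner_same_imp_eq)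

lemma adj_scale: "is_adjoint X Y \<Longrightarrow> Y (c *\<^sub>C a) = c *\<^sub>C Y a"
  unfolding is_adjoint_def by (metis cinner_cscale_right cinner_same_imp_eq)

lemma adj_norm:
  assumes A: "is_adjoint X Y" and K: "\<And>x. norm (X x) \<le> K * norm x"
  shows "norm (Y y) \<le> K * norm y"
proof -
  have "(norm (Y y))^2 = Re (cinner (X (Y y)) y)"
    using A unfolding is_adjoint_def by (simp add: cinner_self_Re)
  also have "\<dots> \<le> cmod (cinner (X (Y y)) y)" by (rule complex_Re_le_cmod)
  also have "\<dots> \<le> norm (X (Y y)) * norm y" by (rule cauchy_schwarz)
  also have "\<dots> \<le> K * norm (Y y) * norm y" using K by (simp add: mult_right_mono)
  finally have *: "norm (Y y) * norm (Y y) \<le> (K * norm y) * norm (Y y)"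
    by (simp add: power2_eq_square algebra_simps)
  show ?thesis
  proof (cases "Y y = 0")
    case True
    have "0 \<le> K * norm y"
    proof (cases "y = 0")
      case False
      have "norm (X y) \<le> K * norm y" by (rule K)
      then have "0 \<le> K * norm y" by (meson norm_ge_zero order_trans)
      then show ?thesis .
    qed simp
    then show ?thesis using True by simp
  next
    case False
    then show ?thesis using * by (simp add: mult_le_cancel_right)
  qed
qed

lemma adj_bclin: "bounded_clinear X \<Longrightarrow> is_adjoint X Y \<Longrightarrow> bounded_clinear Y"
proof -
  assume X: "bounded_clinear X" and A: "is_adjoint X Y"
  obtain K where K: "\<forall>x. norm (X x) \<le> K * norm x" using bclin_bound[OF X] by blast
  show ?thesis
    by (rule bclinI[where K=K]) (use A K adj_add adj_scale adj_norm in metis)+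
qed



lemma not_ap_bb:
  assumes T: "bounded_clinear T" and mu: "mu \<notin> ap_spec T"
  shows "\<exists>c>0. \<forall>x. c * norm x \<le> norm (T x - mu *\<^sub>C x)"
proof (rule ccontr)
  assume "\<not> ?thesis"
  then have "\<forall>n::nat. \<exists>x. norm (T x - mu *\<^sub>C x) < inverse (real (Suc n)) * norm x"
    by (metis inverse_positive_iff_positive not_le of_nat_0_less_iff zero_less_Suc)
  then obtain xs where xs: "\<And>n. norm (T (xs n) - mu *\<^sub>C xs n) < inverse (real (Suc n)) * norm (xs n)"
    by metis
  have xs0: "xs n \<noteq> 0" for n using xs[of n] by (auto simp: bclin_zero[OF T])
  define u where "u n = complex_of_real (inverse (norm (xs n))) *\<^sub>C xs n" for n
  have nu: "norm (u n) = 1" for n using xs0[of n] by (simp add: u_def norm_cscale norm_inverse)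
  have Tu: "T (u n) - mu *\<^sub>C u n = complex_of_real (inverse (norm (xs n))) *\<^sub>C (T (xs n) - mu *\<^sub>C xs n)" for n
    by (simp add: u_def bclin_scale[OF T] cscale_diff_right cscale_cscale mult.commute)
  have bnd: "norm (T (u n) - mu *\<^sub>C u n) \<le> inverse (real (Suc n))" for n
  proof -
    have "norm (T (u n) - mu *\<^sub>C u n) = inverse (norm (xs n)) * norm (T (xs n) - mu *\<^sub>C xs n)"
      by (simp add: Tu norm_cscale norm_inverse)
    also have "\<dots> \<le> inverse (norm (xs n)) * (inverse (real (Suc n)) * norm (xs n))"
      using xs[of n] by (intro mult_left_mono) auto
    also have "\<dots> = inverse (real (Suc n))" using xs0[of n] by simp
    finally show ?thesis .
  qed
  have "(\<lambda>n. T (u n) - mu *\<^sub>C u n) \<longlonglongrightarrow> 0"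
    by (rule Lim_null_comparison[OF _ LIMSEQ_inverse_real_of_nat]) (use bnd in auto)
  then have "mu \<in> ap_spec T" unfolding ap_spec_def using nu by blast
  then show False using mu by simp
qed

lemma bb_zero:
  assumes T: "bounded_clinear T" and ap: "ap_spec T \<subseteq> sphere 0 1"
  shows "\<exists>c>0. \<forall>x. c * norm x \<le> norm (T x)"
proof -
  have "0 \<notin> ap_spec T" using ap by auto
  from not_ap_bb[OF T this] show ?thesis by simp
qed

lemma closed_image_bb:
  assumes T: "bounded_clinear T" and c: "c > 0" and bb: "\<And>x. c * norm x \<le> norm (T x)"
    and M: "closed M"
  shows "closed (T ` M)"
proof (rule closed_sequential_limits[THEN iffD2], intro allI impI, elim conjE)
  fix zs z assume zM: "\<forall>n. zs n \<in> T ` M" and lim: "zs \<longlonglongrightarrow> z"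
  then obtain xs where xsM: "\<And>n. xs n \<in> M" and zx: "\<And>n. zs n = T (xs n)" unfolding image_iff by metis
  have "Cauchy zs" using lim by (rule LIMSEQ_imp_Cauchy)
  have "Cauchy xs"
  proof (rule metric_CauchyI)
    fix e :: real assume e: "e > 0"
    obtain N where N: "\<forall>m\<ge>N. \<forall>n\<ge>N. dist (zs m) (zs n) < c * e"
      using metric_CauchyD[OF \<open>Cauchy zs\<close>, of "c*e"] c e by auto
    show "\<exists>M. \<forall>m\<ge>M. \<forall>n\<ge>M. dist (xs m) (xs n) < e"
    proof (intro exI allI impI)
      fix m n assume "N \<le> m" "N \<le> n"
      have "c * dist (xs m) (xs n) \<le> dist (zs m) (zs n)"
        using bb[of "xs m - xs n"] by (simp add: dist_norm zx bclin_diff[OF T])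
      also have "\<dots> < c * e" using N \<open>N \<le> m\<close> \<open>N \<le> n\<close> by auto
      finally show "dist (xs m) (xs n) < e" using c by simp
    qed
  qed
  then obtain x where xl: "xs \<longlonglongrightarrow> x" using Cauchy_convergent convergent_def by blast
  have xM: "x \<in> M" using closed_sequentially[OF M] xsM xl by blast
  have "(\<lambda>n. T (xs n)) \<longlonglongrightarrow> T x"
    using bounded_linear.tendsto[OF bclin_bl[OF T] xl] .
  then have "z = T x" using lim zx by (metis LIMSEQ_unique ext)
  then show "z \<in> T ` M" using xM by blast
qed

lemma part2:
  fixes T :: "'a::chilbert \<Rightarrow> 'a"
  assumes T: "bounded_clinear T" and ap: "ap_spec T \<subseteq> sphere 0 1" and an: "analytic_op T"
  shows "completely_nonnormal T"
  unfolding completely_nonnormal_def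
proof
  assume "\<exists>M. csubspace M \<and> closed M \<and> M \<noteq> {0} \<and> reduces M T \<and> normal_on M T"
  then obtain M where sub: "csubspace M" and cl: "closed M" and ne: "M \<noteq> {0}"
    and red: "reduces M T" and nor: "normal_on M T" by blast
  obtain c where c: "c > 0" and bb: "\<And>x. c * norm x \<le> norm (T x)" using bb_zero[OF T ap] by blast
  obtain S where adj: "is_adjoint_on M T S" and comm: "\<And>x. x \<in> M \<Longrightarrow> S (T x) = T (S x)"
    using nor unfolding normal_on_def by blast
  have TM: "\<And>x. x \<in> M \<Longrightarrow> T x \<in> M" using red unfolding reduces_def by blast
  have SM: "\<And>x. x \<in> M \<Longrightarrow> S x \<in> M" using adj unfolding is_adjoint_on_def by blast
  have adjM: "\<And>x y. x \<in> M \<Longrightarrow> y \<in> M \<Longrightarrow> cinner (T x) y = cinner x (S y)"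
    using adj unfolding is_adjoint_on_def by blast
  have M0: "0 \<in> M" using sub unfolding csubspace_def by blast
  let ?K = "T ` M"
  have subK: "csubspace ?K"
    unfolding csubspace_def
  proof (intro conjI ballI allI)
    show "0 \<in> ?K" using M0 bclin_zero[OF T] by (metis image_eqI)
    fix x y assume "x \<in> ?K" "y \<in> ?K"
    then obtain a b where "a \<in> M" "b \<in> M" "x = T a" "y = T b" by blast
    then show "x + y \<in> ?K" using sub unfolding csubspace_def by (metis bclin_add[OF T] image_eqI)
  next
    fix a x assume "x \<in> ?K"
    then obtain b where "b \<in> M" "x = T b" by blast
    then show "a *\<^sub>C x \<in> ?K" using sub unfolding csubspace_def by (metis bclin_scale[OF T] image_eqI)
  qed
  have clK: "closed ?K" by (rule closed_image_bb[OF T c bb cl])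
  have MK: "M \<subseteq> ?K"
  proof
    fix y assume yM: "y \<in> M"
    obtain p where pK: "p \<in> ?K" and orth: "\<forall>k\<in>?K. cinner k (y - p) = 0"
      using projection_exists[OF subK clK] by blast
    have pM: "p \<in> M" using pK TM by blast
    define q where "q = y - p"
    have qM: "q \<in> M" unfolding q_def by (rule csubspace_diff[OF sub yM pM])
    have "cinner (S q) (S q) = 0"
    proof -
      have "cinner (T (S q)) q = 0" using orth SM[OF qM] by (simp add: q_def)
      then show ?thesis using adjM[OF SM[OF qM] qM] by simp
    qed
    then have Sq: "S q = 0" by (simp add: cinner_eq_zero)
    have "cinner (T q) (T q) = cinner q (S (T q))" using adjM[OF qM TM[OF qM]] .
    also have "\<dots> = 0" using comm[OF qM] Sq bclin_zero[OF T] by simp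
    finally have "T q = 0" by (simp add: cinner_eq_zero)
    then have "q = 0" using bb[of q] c by (simp add: mult_le_0_iff)
    then show "y \<in> ?K" using pK by (simp add: q_def)
  qed
  have "M \<subseteq> range (T ^^ n)" for n
  proof (induction n)
    case 0 then show ?case by simp
  next
    case (Suc n)
    show ?case
    proof
      fix y assume "y \<in> M"
      then obtain x where "x \<in> M" "y = T x" using MK by blast
      then obtain w where "x = (T ^^ n) w" using Suc by blast
      then show "y \<in> range (T ^^ Suc n)" using \<open>y = T x\<close> by simp
    qed
  qed
  then have "M \<subseteq> (\<Inter>n. range (T ^^ n))" by blast
  then have "M \<subseteq> {0}" using an unfolding analytic_op_def by simp
  then show False using ne M0 by blast
qed



lemma surj_perturb:
  fixes X E :: "'a::chilbert \<Rightarrow> 'a"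
  assumes Xd: "\<And>a b. X (a - b) = X a - X b" and Ed: "\<And>a b. E (a - b) = E a - E b"
    and sX: "surj X" and c: "c > 0" and bb: "\<And>x. c * norm x \<le> norm (X x)"
    and eb: "\<And>x. norm (E x) \<le> e * norm x" and e0: "0 \<le> e" and ec: "e < c"
  shows "surj (\<lambda>x. X x - E x)"
proof -
  define Xi where "Xi = inv X"
  have XXi: "X (Xi u) = u" for u unfolding Xi_def using sX by (simp add: surj_f_inv_f)
  have Xi_lip: "norm (Xi u - Xi v) \<le> norm (u - v) / c" for u v
  proof -
    have "c * norm (Xi u - Xi v) \<le> norm (X (Xi u - Xi v))" by (rule bb)
    also have "\<dots> = norm (u - v)" by (simp add: Xd XXi)
    finally show ?thesis using c by (simp add: field_simps)
  qed
  show ?thesis unfolding surj_def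
  proof
    fix y
    define f where "f z = Xi (y + E z)" for z
    have "\<forall>a b. dist (f a) (f b) \<le> (e / c) * dist a b"
    proof (intro allI)
      fix a b
      have "dist (f a) (f b) \<le> norm ((y + E a) - (y + E b)) / c"
        unfolding f_def dist_norm by (rule Xi_lip)
      also have "(y + E a) - (y + E b) = E (a - b)" by (simp add: Ed)
      also have "norm (E (a - b)) / c \<le> e * norm (a - b) / c"
        using eb c by (simp add: divide_right_mono)
      finally show "dist (f a) (f b) \<le> (e / c) * dist a b" by (simp add: dist_norm)
    qed
    moreover have "0 \<le> e / c" "e / c < 1" using e0 c ec by auto
    ultimately obtain x where "f x = x" using banach_fix_type by metis
    then have "X x = y + E x" using XXi unfolding f_def by metis
    then show "\<exists>x. y = X x - E x" by (intro exI[of _ x]) simp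
  qed
qed

lemma bb_perturb:
  assumes "\<And>x. c * norm x \<le> norm (T x - mu *\<^sub>C x)"
  shows "(c - cmod (nu - mu)) * norm x \<le> norm (T x - nu *\<^sub>C (x::'a::chilbert))"
proof -
  have eq: "T x - nu *\<^sub>C x = (T x - mu *\<^sub>C x) - (nu - mu) *\<^sub>C x" by (simp add: cscale_diff_left)
  have "norm (T x - mu *\<^sub>C x) - norm ((nu - mu) *\<^sub>C x) \<le> norm (T x - nu *\<^sub>C x)"
    unfolding eq by (rule norm_triangle_ineq2)
  then show ?thesis using assms[of x] by (simp add: norm_cscale algebra_simps)
qed

lemma shift_diff: "bounded_clinear T \<Longrightarrow> (\<lambda>x. T x - mu *\<^sub>C x) (a - b) = (\<lambda>x. T x - mu *\<^sub>C x) a - (\<lambda>x. T x - mu *\<^sub>C x) (b::'a::chilbert)"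
  by (simp add: bclin_diff cscale_diff_right)

lemma spec_connected:
  fixes T :: "'a::chilbert \<Rightarrow> 'a"
  assumes T: "bounded_clinear T" and U: "open U" "connected U"
    and nap: "\<And>mu. mu \<in> U \<Longrightarrow> mu \<notin> ap_spec T" and m0: "mu0 \<in> U"
    and p0: "surj (\<lambda>x. T x - mu0 *\<^sub>C x)"
  shows "\<forall>mu\<in>U. surj (\<lambda>x. T x - mu *\<^sub>C x)"
proof -
  have "\<forall>mu\<in>U. \<exists>c>0. \<forall>x. c * norm x \<le> norm (T x - mu *\<^sub>C x)"
    using not_ap_bb[OF T] nap by blast
  then obtain cf where cf: "\<And>mu. mu \<in> U \<Longrightarrow> cf mu > 0"
    and cfb: "\<And>mu x. mu \<in> U \<Longrightarrow> cf mu * norm x \<le> norm (T x - mu *\<^sub>C x)" by metis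
  have step: "surj (\<lambda>x. T x - nu *\<^sub>C x)"
    if "surj (\<lambda>x. T x - mu *\<^sub>C x)" "c > 0" "\<And>x. c * norm x \<le> norm (T x - mu *\<^sub>C x)"
       "cmod (nu - mu) < c" for mu nu c
  proof -
    have "surj (\<lambda>x. (T x - mu *\<^sub>C x) - (nu - mu) *\<^sub>C x)"
      by (rule surj_perturb[where c=c and e="cmod (nu - mu)"])
         (use that in \<open>auto simp: bclin_diff[OF T] cscale_diff_right norm_cscale\<close>)
    moreover have "(\<lambda>x. (T x - mu *\<^sub>C x) - (nu - mu) *\<^sub>C x) = (\<lambda>x. T x - nu *\<^sub>C x)"
      by (rule ext) (simp add: cscale_diff_left)
    ultimately show ?thesis by metis
  qed
  define G where "G = {mu\<in>U. surj (\<lambda>x. T x - mu *\<^sub>C x)}"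
  define H where "H = {mu\<in>U. \<not> surj (\<lambda>x. T x - mu *\<^sub>C x)}"
  have oG: "open G" unfolding open_contains_ball
  proof
    fix mu assume "mu \<in> G"
    then have mU: "mu \<in> U" and pm: "surj (\<lambda>x. T x - mu *\<^sub>C x)" by (auto simp: G_def)
    obtain r where r: "r > 0" "ball mu r \<subseteq> U" using U(1) mU open_contains_ball by blast
    have "ball mu (min r (cf mu)) \<subseteq> G"
    proof
      fix nu assume "nu \<in> ball mu (min r (cf mu))"
      then have "nu \<in> U" "cmod (nu - mu) < cf mu" using r by (auto simp: dist_norm norm_minus_commute)
      then show "nu \<in> G" using step[OF pm cf[OF mU] cfb[OF mU]] by (auto simp: G_def)
    qed
    then show "\<exists>e>0. ball mu e \<subseteq> G" using r cf[OF mU] by (intro exI[of _ "min r (cf mu)"]) auto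
  qed
  have oH: "open H" unfolding open_contains_ball
  proof
    fix mu assume "mu \<in> H"
    then have mU: "mu \<in> U" and pm: "\<not> surj (\<lambda>x. T x - mu *\<^sub>C x)" by (auto simp: H_def)
    obtain r where r: "r > 0" "ball mu r \<subseteq> U" using U(1) mU open_contains_ball by blast
    have "ball mu (min r (cf mu / 2)) \<subseteq> H"
    proof
      fix nu assume "nu \<in> ball mu (min r (cf mu / 2))"
      then have nU: "nu \<in> U" and d: "cmod (nu - mu) < cf mu / 2" using r by (auto simp: dist_norm norm_minus_commute)
      have "\<not> surj (\<lambda>x. T x - nu *\<^sub>C x)"
      proof
        assume pn: "surj (\<lambda>x. T x - nu *\<^sub>C x)"
        have "(cf mu - cmod (nu - mu)) * norm x \<le> norm (T x - nu *\<^sub>C x)" for x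
          by (rule bb_perturb) (rule cfb[OF mU])
        moreover have "cmod (mu - nu) < cf mu - cmod (nu - mu)" using d by (simp add: norm_minus_commute)
        moreover have "cf mu - cmod (nu - mu) > 0" using d cf[OF mU] by simp
        ultimately have "surj (\<lambda>x. T x - mu *\<^sub>C x)" using step[OF pn] by blast
        then show False using pm by simp
      qed
      then show "nu \<in> H" using nU by (simp add: H_def)
    qed
    then show "\<exists>e>0. ball mu e \<subseteq> H" using r cf[OF mU] by (intro exI[of _ "min r (cf mu / 2)"]) auto
  qed
  have "G \<inter> U = {} \<or> H \<inter> U = {}"
    by (rule connectedD[OF U(2) oG oH]) (auto simp: G_def H_def)
  moreover have "mu0 \<in> G \<inter> U" using m0 p0 by (simp add: G_def)
  ultimately have "H \<inter> U = {}" by blast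
  then show ?thesis by (auto simp: H_def)
qed

lemma spec_T:
  fixes T :: "'a::chilbert \<Rightarrow> 'a"
  assumes T: "bounded_clinear T" and ap: "ap_spec T \<subseteq> sphere 0 1" and sT: "surj T"
    and mu: "cmod mu \<noteq> 1"
  shows "surj (\<lambda>x. T x - mu *\<^sub>C x) \<and> (\<exists>c>0. \<forall>x. c * norm x \<le> norm (T x - mu *\<^sub>C x))"
proof
  have nap: "nu \<notin> ap_spec T" if "cmod nu \<noteq> 1" for nu using ap that by auto
  show "\<exists>c>0. \<forall>x. c * norm x \<le> norm (T x - mu *\<^sub>C x)" using not_ap_bb[OF T nap[OF mu]] .
  show "surj (\<lambda>x. T x - mu *\<^sub>C x)"
  proof (cases "cmod mu < 1")
    case True
    have "\<forall>nu\<in>ball 0 1. surj (\<lambda>x. T x - nu *\<^sub>C x)"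
    proof (rule spec_connected[OF T open_ball convex_connected[OF convex_ball]])
      show "nu \<notin> ap_spec T" if "nu \<in> ball 0 1" for nu using that nap by auto
      show "(0::complex) \<in> ball 0 1" by simp
      show "surj (\<lambda>x. T x - 0 *\<^sub>C x)" using sT by simp
    qed
    then show ?thesis using True by auto
  next
    case False
    then have m1: "cmod mu > 1" using mu by simp
    obtain K where K: "K > 0" "\<And>x. norm (T x) \<le> K * norm x" using bclin_bound[OF T] by blast
    define mu0 where "mu0 = complex_of_real (K + 1)"
    have cm0: "cmod mu0 = K + 1" using K by (simp add: mu0_def)
    have mu00: "mu0 \<noteq> 0" using cm0 K by auto
    have "\<forall>nu\<in>- cball 0 1. surj (\<lambda>x. T x - nu *\<^sub>C x)"
    proof (rule spec_connected[OF T])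
      show "open (- cball (0::complex) 1)" by (simp add: open_Compl)
      show "connected (- cball (0::complex) 1)"
        by (rule connected_complement_bounded_convex) auto
      show "nu \<notin> ap_spec T" if "nu \<in> - cball 0 1" for nu using that nap by auto
      show "mu0 \<in> - cball 0 1" using cm0 K by simp
      have "surj (\<lambda>x. (- (mu0 *\<^sub>C x)) - (- T x))"
      proof (rule surj_perturb[where c="K+1" and e=K])
        show "- (mu0 *\<^sub>C (a - b)) = - (mu0 *\<^sub>C a) - - (mu0 *\<^sub>C b)" for a b
          by (simp add: cscale_diff_right)
        show "- T (a - b) = - T a - - T b" for a b by (simp add: bclin_diff[OF T])
        show "surj (\<lambda>x. - (mu0 *\<^sub>C x))"
        proof (rule surjI)
          fix y
          show "- (mu0 *\<^sub>C ((- inverse mu0) *\<^sub>C y)) = y"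
            using mu00 by (simp add: cscale_cscale cscale_minus_right cscale_minus_left cscale_one)
        qed
        show "(K + 1) * norm x \<le> norm (- (mu0 *\<^sub>C x))" for x by (simp add: norm_cscale cm0)
        show "norm (- T x) \<le> K * norm x" for x using K by simp
      qed (use K in auto)
      then show "surj (\<lambda>x. T x - mu0 *\<^sub>C x)" by simp
    qed
    then show ?thesis using m1 by auto
  qed
qed

lemma spec_inv:
  fixes T S :: "'a::chilbert \<Rightarrow> 'a"
  assumes T: "bounded_clinear T" and S: "bounded_clinear S"
    and ST: "\<And>x. S (T x) = x" and TS: "\<And>x. T (S x) = x"
    and specT: "\<And>mu. cmod mu \<noteq> 1 \<Longrightarrow> surj (\<lambda>x. T x - mu *\<^sub>C x) \<and> (\<exists>c>0. \<forall>x. c * norm x \<le> norm (T x - mu *\<^sub>C x))"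
    and lam: "1 < cmod lam"
  shows "surj (\<lambda>x. S x - lam *\<^sub>C x) \<and> (\<exists>c>0. \<forall>x. c * norm x \<le> norm (S x - lam *\<^sub>C x))"
proof -
  define mu where "mu = inverse lam"
  have l0: "lam \<noteq> 0" using lam by auto
  have mu1: "cmod mu \<noteq> 1" using lam by (simp add: mu_def norm_inverse)
  have key: "S x - lam *\<^sub>C x = S ((- lam) *\<^sub>C (T x - mu *\<^sub>C x))" for x
    using l0 by (simp add: bclin_scale[OF S] bclin_diff[OF S] ST cscale_diff_right cscale_cscale
        cscale_minus_left mu_def cscale_one)
  obtain c where c: "c > 0" "\<And>x. c * norm x \<le> norm (T x - mu *\<^sub>C x)" using specT[OF mu1] by blast
  have sm: "surj (\<lambda>x. T x - mu *\<^sub>C x)" using specT[OF mu1] by blast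
  obtain K where K: "K > 0" "\<And>x. norm (T x) \<le> K * norm x" using bclin_bound[OF T] by blast
  show ?thesis
  proof
    show "surj (\<lambda>x. S x - lam *\<^sub>C x)"
      unfolding surj_def
    proof
      fix y
      obtain x where x: "(- inverse lam) *\<^sub>C T y = T x - mu *\<^sub>C x" using sm unfolding surj_def by blast
      have "S x - lam *\<^sub>C x = S ((- lam) *\<^sub>C ((- inverse lam) *\<^sub>C T y))" unfolding key x ..
      also have "\<dots> = y" using l0 by (simp add: cscale_cscale ST cscale_one)
      finally show "\<exists>x. y = S x - lam *\<^sub>C x" by metis
    qed
    have Sbb: "norm u \<le> K * norm (S u)" for u using K(2)[of "S u"] by (simp add: TS)
    show "\<exists>c>0. \<forall>x. c * norm x \<le> norm (S x - lam *\<^sub>C x)"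
    proof (intro exI[of _ "c * cmod lam / K"] conjI allI)
      show "0 < c * cmod lam / K" using c K l0 by simp
      fix x
      have "c * cmod lam * norm x \<le> cmod lam * norm (T x - mu *\<^sub>C x)"
        using mult_left_mono[OF c(2)[of x], of "cmod lam"] by (simp add: mult.commute mult.left_commute)
      also have "\<dots> = norm ((- lam) *\<^sub>C (T x - mu *\<^sub>C x))" by (simp add: norm_cscale)
      also have "\<dots> \<le> K * norm (S x - lam *\<^sub>C x)" unfolding key by (rule Sbb)
      finally show "c * cmod lam / K * norm x \<le> norm (S x - lam *\<^sub>C x)"
        using K by (simp add: field_simps)
    qed
  qed
qed



lemma cinner_sum_right: "cinner y (sum f A) = (\<Sum>a\<in>A. cinner (y::'a::chilbert) (f a))"
  by (induction A rule: infinite_finite_induct) (simp_all add: cinner_add_right)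

lemma funpow_bound:
  fixes X :: "'a::chilbert \<Rightarrow> 'a"
  assumes "\<And>x. norm (X x) \<le> K * norm x" "0 \<le> K"
  shows "norm ((X ^^ n) x) \<le> K ^ n * norm (x::'a::chilbert)"
proof (induction n)
  case 0 then show ?case by simp
next
  case (Suc n)
  have "norm ((X ^^ Suc n) x) \<le> K * norm ((X ^^ n) x)" using assms(1) by simp
  also have "\<dots> \<le> K * (K ^ n * norm x)" using Suc assms(2) by (simp add: mult_left_mono)
  finally show ?case by (simp add: mult.assoc)
qed

lemma growth_bound:
  fixes X :: "'a::chilbert \<Rightarrow> 'a"
  assumes X: "bounded_clinear X"
    and inv: "\<And>lam. 1 < cmod lam \<Longrightarrow> surj (\<lambda>x. X x - lam *\<^sub>C x) \<and> (\<exists>c>0. \<forall>x. c * norm x \<le> norm (X x - lam *\<^sub>C x))"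
    and r: "0 < r" "r < 1"
  shows "\<exists>K. \<forall>n x. norm ((X ^^ n) x) \<le> K * (inverse r) ^ n * norm x"
proof -
  obtain KX where KX: "KX > 0" "\<And>x. norm (X x) \<le> KX * norm x" using bclin_bound[OF X] by blast
  define D where "D w x = x - w *\<^sub>C X x" for w x
  have Dd: "D w (a - b) = D w a - D w b" for w a b
    by (simp add: D_def bclin_diff[OF X] cscale_diff_right)
  have Ds: "D w (c *\<^sub>C a) = c *\<^sub>C D w a" for w c a
    by (simp add: D_def bclin_scale[OF X] cscale_diff_right cscale_cscale mult.commute)
  have Dball: "surj (D w) \<and> (\<exists>c>0. \<forall>x. c * norm x \<le> norm (D w x))" if w: "w \<in> ball 0 1" for w
  proof (cases "w = 0")
    case True
    then show ?thesis unfolding surj_def by (auto simp: D_def intro!: exI[of _ 1])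
  next
    case False
    define lam where "lam = inverse w"
    have lam1: "1 < cmod lam" using w False by (simp add: lam_def norm_inverse one_less_inverse)
    have Deq: "D w x = (- w) *\<^sub>C (X x - lam *\<^sub>C x)" for x
      using False by (simp add: D_def lam_def cscale_diff_right cscale_cscale cscale_minus_left cscale_one)
    obtain c where c: "c > 0" "\<And>x. c * norm x \<le> norm (X x - lam *\<^sub>C x)" using inv[OF lam1] by blast
    have sl: "surj (\<lambda>x. X x - lam *\<^sub>C x)" using inv[OF lam1] by blast
    show ?thesis
    proof
      show "surj (D w)" unfolding surj_def
      proof
        fix y
        obtain x where x: "(- lam) *\<^sub>C y = X x - lam *\<^sub>C x" using sl unfolding surj_def by blast
        have "D w x = (- w) *\<^sub>C ((- lam) *\<^sub>C y)" unfolding Deq x ..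
        also have "\<dots> = y" using False by (simp add: cscale_cscale lam_def cscale_one)
        finally show "\<exists>x. y = D w x" by metis
      qed
      show "\<exists>c>0. \<forall>x. c * norm x \<le> norm (D w x)"
      proof (intro exI[of _ "cmod w * c"] conjI allI)
        show "0 < cmod w * c" using False c by simp
        fix x
        show "cmod w * c * norm x \<le> norm (D w x)"
          using mult_left_mono[OF c(2)[of x], of "cmod w"] by (simp add: Deq norm_cscale mult.assoc)
      qed
    qed
  qed
  obtain cf where cf: "\<And>w. w \<in> ball 0 1 \<Longrightarrow> cf w > 0"
    and cfb: "\<And>w x. w \<in> ball 0 1 \<Longrightarrow> cf w * norm x \<le> norm (D w x)"
    using Dball by metis
  have sD: "w \<in> ball 0 1 \<Longrightarrow> surj (D w)" for w using Dball by blast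
  define R where "R w = inv (D w)" for w
  have DR: "D w (R w y) = y" if "w \<in> ball 0 1" for w y
    unfolding R_def using sD[OF that] by (simp add: surj_f_inv_f)
  have Dinj: "a = b" if "w \<in> ball 0 1" "D w a = D w b" for w a b
  proof -
    have "cf w * norm (a - b) \<le> norm (D w (a - b))" by (rule cfb[OF that(1)])
    also have "\<dots> = 0" using that(2) by (simp add: Dd)
    finally show ?thesis using cf[OF that(1)] by (simp add: mult_le_0_iff)
  qed
  have Rnorm: "cf w * norm (R w y) \<le> norm y" if "w \<in> ball 0 1" for w y
    using cfb[OF that, of "R w y"] DR[OF that] by simp
  have Rscale: "R w (c *\<^sub>C y) = c *\<^sub>C R w y" if "w \<in> ball 0 1" for w c y
    by (rule Dinj[OF that]) (simp add: DR[OF that] Ds)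
  have Rdiff: "R w (a - b) = R w a - R w b" if "w \<in> ball 0 1" for w a b
    by (rule Dinj[OF that]) (simp add: DR[OF that] Dd)
  have bb_near: "cf w0 / 2 * norm x \<le> norm (D w x)"
    if w0: "w0 \<in> ball 0 1" and d: "cmod (w - w0) \<le> cf w0 / (2 * KX)" for w0 w x
  proof -
    have eq: "D w x = D w0 x - (w - w0) *\<^sub>C X x" by (simp add: D_def cscale_diff_left)
    have "norm (D w0 x) - norm ((w - w0) *\<^sub>C X x) \<le> norm (D w x)"
      unfolding eq by (rule norm_triangle_ineq2)
    moreover have "norm ((w - w0) *\<^sub>C X x) \<le> cf w0 / 2 * norm x"
    proof -
      have "norm ((w - w0) *\<^sub>C X x) = cmod (w - w0) * norm (X x)" by (simp add: norm_cscale)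
      also have "\<dots> \<le> (cf w0 / (2 * KX)) * (KX * norm x)"
        using d KX cf[OF w0] by (intro mult_mono) auto
      also have "\<dots> = cf w0 / 2 * norm x" using KX by (simp add: field_simps)
      finally show ?thesis .
    qed
    ultimately show ?thesis using cfb[OF w0, of x] by simp
  qed
  have Rnear: "cf w0 / 2 * norm (R w y) \<le> norm y"
    if "w0 \<in> ball 0 1" "w \<in> ball 0 1" "cmod (w - w0) \<le> cf w0 / (2 * KX)" for w0 w y
    using bb_near[OF that(1) that(3), of "R w y"] DR[OF that(2)] by simp
  have resolvent: "R w v - R w0 v = (w - w0) *\<^sub>C R w (X (R w0 v))"
    if w: "w \<in> ball 0 1" and w0: "w0 \<in> ball 0 1" for w w0 v
  proof (rule Dinj[OF w])
    have "D w (R w0 v) = D w0 (R w0 v) - (w - w0) *\<^sub>C X (R w0 v)"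
      by (simp add: D_def cscale_diff_left)
    then have "D w (R w0 v) = v - (w - w0) *\<^sub>C X (R w0 v)" by (simp add: DR[OF w0])
    then show "D w (R w v - R w0 v) = D w ((w - w0) *\<^sub>C R w (X (R w0 v)))"
      by (simp add: Dd Ds DR[OF w])
  qed
  have hol: "(\<lambda>w. cinner y (R w x)) holomorphic_on ball 0 1" for x y
    unfolding holomorphic_on_open[OF open_ball]
  proof
    fix w0 :: complex assume w0: "w0 \<in> ball 0 1"
    define v where "v = X (R w0 x)"
    define g where "g w = cinner y (R w v)" for w
    define d where "d = min (1 - cmod w0) (cf w0 / (2 * KX))"
    have d0: "d > 0" using w0 cf[OF w0] KX by (simp add: d_def)
    have near: "w \<in> ball 0 1 \<and> cmod (w - w0) \<le> cf w0 / (2 * KX)" if "cmod (w - w0) < d" for w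
    proof
      have "cmod w \<le> cmod w0 + cmod (w - w0)" by (metis add.commute diff_add_cancel norm_triangle_ineq)
      then show "w \<in> ball 0 1" using that by (simp add: d_def)
      show "cmod (w - w0) \<le> cf w0 / (2 * KX)" using that by (simp add: d_def)
    qed
    define B where "B = norm y * (2 / cf w0) * norm (X (R w0 v))"
    have gb: "norm (g w - g w0) \<le> B * cmod (w - w0)" if "cmod (w - w0) < d" for w
    proof -
      have wb: "w \<in> ball 0 1" and wd: "cmod (w - w0) \<le> cf w0 / (2 * KX)" using near[OF that] by auto
      have "g w - g w0 = cinner y ((w - w0) *\<^sub>C R w (X (R w0 v)))"
        by (simp add: g_def cinner_diff_right[symmetric] resolvent[OF wb w0])
      also have "norm \<dots> \<le> norm y * norm ((w - w0) *\<^sub>C R w (X (R w0 v)))" by (rule cauchy_schwarz)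
      also have "\<dots> = norm y * cmod (w - w0) * norm (R w (X (R w0 v)))" by (simp add: norm_cscale)
      also have "\<dots> \<le> norm y * cmod (w - w0) * ((2 / cf w0) * norm (X (R w0 v)))"
      proof (intro mult_left_mono)
        have "cf w0 / 2 * norm (R w (X (R w0 v))) \<le> norm (X (R w0 v))" by (rule Rnear[OF w0 wb wd])
        then show "norm (R w (X (R w0 v))) \<le> 2 / cf w0 * norm (X (R w0 v))"
          using cf[OF w0] by (simp add: field_simps)
      qed auto
      also have "\<dots> = B * cmod (w - w0)" by (simp add: B_def)
      finally show ?thesis .
    qed
    have gt: "(g \<longlongrightarrow> g w0) (at w0)"
    proof (rule LIM_zero_cancel)
      have lim0: "((\<lambda>w. B * cmod (w - w0)) \<longlongrightarrow> 0) (at w0)"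
      proof -
        have "((\<lambda>w. B * cmod (w - w0)) \<longlongrightarrow> B * cmod (w0 - w0)) (at w0)" by (intro tendsto_intros)
        then show ?thesis by simp
      qed
      show "((\<lambda>w. g w - g w0) \<longlongrightarrow> 0) (at w0)"
      proof (rule Lim_null_comparison[OF _ lim0])
        show "\<forall>\<^sub>F w in at w0. norm (g w - g w0) \<le> B * cmod (w - w0)"
          unfolding eventually_at using d0 gb by (auto simp: dist_norm)
      qed
    qed
    have "((\<lambda>w. (cinner y (R w x) - cinner y (R w0 x)) / (w - w0)) \<longlongrightarrow> g w0) (at w0)"
    proof (rule Lim_transform_eventually[OF gt])
      show "\<forall>\<^sub>F w in at w0. g w = (cinner y (R w x) - cinner y (R w0 x)) / (w - w0)"
        unfolding eventually_at
      proof (intro exI[of _ d] conjI ballI impI)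
        show "d > 0" by (rule d0)
        fix w assume "w \<in> UNIV" and h: "w \<noteq> w0 \<and> dist w w0 < d"
        then have wb: "w \<in> ball 0 1" using near by (auto simp: dist_norm)
        have "cinner y (R w x) - cinner y (R w0 x) = (w - w0) * g w"
          by (simp add: g_def v_def cinner_diff_right[symmetric] resolvent[OF wb w0] cinner_cscale_right)
        then show "g w = (cinner y (R w x) - cinner y (R w0 x)) / (w - w0)" using h by simp
      qed
    qed
    then show "\<exists>f'. ((\<lambda>w. cinner y (R w x)) has_field_derivative f') (at w0)"
      unfolding has_field_derivative_iff by blast
  qed
  have cbr: "cball 0 r \<subseteq> ball (0::complex) 1" using r by auto
  have unif: "\<exists>Kr>0. \<forall>w\<in>cball 0 r. \<forall>y. Kr * norm (R w y) \<le> norm y"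
  proof -
    have cov: "cball 0 r \<subseteq> (\<Union>w\<in>cball 0 r. ball w (cf w / (2 * KX)))"
    proof
      fix w :: complex assume "w \<in> cball 0 r"
      then have "cf w > 0" using cf cbr by blast
      then show "w \<in> (\<Union>w\<in>cball 0 r. ball w (cf w / (2 * KX)))" using \<open>w \<in> cball 0 r\<close> KX by force
    qed
    obtain Fs where Fs: "Fs \<subseteq> cball 0 r" "finite Fs" "cball 0 r \<subseteq> (\<Union>w\<in>Fs. ball w (cf w / (2 * KX)))"
      using compactE_image[OF compact_cball, of "cball 0 r" "\<lambda>w. ball w (cf w / (2 * KX))"] cov
      by auto
    have "0 \<in> cball (0::complex) r" using r by simp
    then have Fne: "Fs \<noteq> {}" using Fs(3) by auto
    define Kr where "Kr = Min ((\<lambda>w. cf w / 2) ` Fs)"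
    have Kr0: "Kr > 0" unfolding Kr_def using Fs Fne cf cbr by auto
    show ?thesis
    proof (intro exI[of _ Kr] conjI ballI allI)
      show "Kr > 0" by (rule Kr0)
      fix w :: complex and y assume wc: "w \<in> cball 0 r"
      then obtain w0 where w0F: "w0 \<in> Fs" and ww0: "w \<in> ball w0 (cf w0 / (2 * KX))" using Fs(3) by blast
      have w0b: "w0 \<in> ball 0 1" using w0F Fs(1) cbr by blast
      have wb: "w \<in> ball 0 1" using wc cbr by blast
      have "cmod (w - w0) \<le> cf w0 / (2 * KX)" using ww0 by (simp add: dist_norm norm_minus_commute)
      then have a: "cf w0 / 2 * norm (R w y) \<le> norm y" by (rule Rnear[OF w0b wb])
      have "Kr \<le> cf w0 / 2" unfolding Kr_def by (rule Min_le) (use Fs(2) w0F in auto)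
      then have "Kr * norm (R w y) \<le> cf w0 / 2 * norm (R w y)" by (rule mult_right_mono) simp
      then show "Kr * norm (R w y) \<le> norm y" using a by simp
    qed
  qed
  then obtain Kr where Kr: "Kr > 0" "\<And>w y. w \<in> cball 0 r \<Longrightarrow> Kr * norm (R w y) \<le> norm y" by blast
  have XR: "X (R w v) = R w (X v)" if w: "w \<in> ball 0 1" for w v
  proof (rule Dinj[OF w])
    have "D w (X (R w v)) = X (D w (R w v))" by (simp add: D_def bclin_diff[OF X] bclin_scale[OF X])
    then show "D w (X (R w v)) = D w (R w (X v))" by (simp add: DR[OF w])
  qed
  have Rexp: "R w v = v + w *\<^sub>C R w (X v)" if w: "w \<in> ball 0 1" for w v
  proof -
    have "R w v - w *\<^sub>C X (R w v) = v" using DR[OF w, of v] by (simp add: D_def)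
    then show ?thesis by (simp add: XR[OF w] algebra_simps)
  qed
  have partial: "R w x = (\<Sum>k<N. w ^ k *\<^sub>C (X ^^ k) x) + w ^ N *\<^sub>C R w ((X ^^ N) x)"
    if w: "w \<in> ball 0 1" for w x N
  proof (induction N)
    case 0 then show ?case by (simp add: cscale_one)
  next
    case (Suc N)
    have "w ^ N *\<^sub>C R w ((X ^^ N) x) = w ^ N *\<^sub>C (X ^^ N) x + w ^ Suc N *\<^sub>C R w ((X ^^ Suc N) x)"
      by (subst Rexp[OF w]) (simp add: cscale_add_right cscale_cscale mult.commute)
    then show ?case using Suc by (simp add: add.assoc)
  qed
  have coef: "cmod (cinner y ((X ^^ n) x)) \<le> norm y * norm x / Kr / r ^ n" for n x y
  proof -
    define h where "h w = cinner y (R w x)" for w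
    define a where "a n = cinner y ((X ^^ n) x)" for n
    have sums: "(\<lambda>n. a n * w ^ n) sums h w" if w: "w \<in> ball 0 1" and wk: "cmod w * KX < 1" for w
    proof -
      have diff: "h w - (\<Sum>n<N. a n * w ^ n) = w ^ N * cinner y (R w ((X ^^ N) x))" for N
      proof -
        have "(\<Sum>n<N. a n * w ^ n) = cinner y (\<Sum>k<N. w ^ k *\<^sub>C (X ^^ k) x)"
          by (simp add: cinner_sum_right cinner_cscale_right a_def mult.commute)
        then show ?thesis
          by (simp add: h_def partial[OF w, of x N] cinner_add_right cinner_cscale_right)
      qed
      have bnd: "norm (h w - (\<Sum>n<N. a n * w ^ n)) \<le> (norm y * norm x / cf w) * (cmod w * KX) ^ N" for N
      proof -
        have "norm (h w - (\<Sum>n<N. a n * w ^ n)) = cmod w ^ N * cmod (cinner y (R w ((X ^^ N) x)))"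
          by (simp add: diff norm_mult norm_power)
        also have "\<dots> \<le> cmod w ^ N * (norm y * norm (R w ((X ^^ N) x)))"
          by (intro mult_left_mono cauchy_schwarz) auto
        also have "\<dots> \<le> cmod w ^ N * (norm y * (KX ^ N * norm x / cf w))"
        proof (intro mult_left_mono)
          have "cf w * norm (R w ((X ^^ N) x)) \<le> norm ((X ^^ N) x)" by (rule Rnorm[OF w])
          also have "\<dots> \<le> KX ^ N * norm x" by (rule funpow_bound) (use KX in auto)
          finally show "norm (R w ((X ^^ N) x)) \<le> KX ^ N * norm x / cf w"
            using cf[OF w] by (simp add: field_simps)
        qed auto
        also have "\<dots> = (norm y * norm x / cf w) * (cmod w * KX) ^ N"
          by (simp add: power_mult_distrib)
        finally show ?thesis .
      qed
      have "(\<lambda>N. (norm y * norm x / cf w) * (cmod w * KX) ^ N) \<longlonglongrightarrow> (norm y * norm x / cf w) * 0"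
        using wk KX by (intro tendsto_intros) (simp add: abs_mult)
      then have lim0: "(\<lambda>N. (norm y * norm x / cf w) * (cmod w * KX) ^ N) \<longlonglongrightarrow> 0" by simp
      have ev: "\<forall>\<^sub>F N in sequentially. norm (h w - (\<Sum>n<N. a n * w ^ n)) \<le> (norm y * norm x / cf w) * (cmod w * KX) ^ N"
        by (intro always_eventually allI bnd)
      have "(\<lambda>N. h w - (\<Sum>n<N. a n * w ^ n)) \<longlonglongrightarrow> 0"
        by (rule Lim_null_comparison[OF ev lim0])
      then have "(\<lambda>N. h w - (h w - (\<Sum>n<N. a n * w ^ n))) \<longlonglongrightarrow> h w - 0"
        by (intro tendsto_diff tendsto_const)
      then show ?thesis unfolding sums_def by simp
    qed
    define r0 where "r0 = 1 / (KX + 1)"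
    have r0: "r0 > 0" "r0 < 1" "r0 * KX < 1" using KX by (auto simp: r0_def field_simps)
    define Fp where "Fp = Abs_fps a"
    have conv: "fps_conv_radius Fp > 0"
    proof -
      have "summable (\<lambda>n. a n * (complex_of_real (r0/2)) ^ n)"
        using sums[of "complex_of_real (r0/2)"] r0 by (auto simp: sums_summable abs_if)
      then have "conv_radius a \<ge> norm (complex_of_real (r0/2))" by (rule conv_radius_geI)
      then have c1: "ereal (r0/2) \<le> conv_radius a" using r0 by simp
      have c0: "0 < ereal (r0/2)" using r0 by simp
      show ?thesis using less_le_trans[OF c0 c1] by (simp add: fps_conv_radius_def Fp_def)
    qed
    have exp: "h has_fps_expansion Fp"
      unfolding has_fps_expansion_def
    proof (intro conjI conv)
      show "\<forall>\<^sub>F z in nhds 0. eval_fps Fp z = h z"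
        unfolding eventually_nhds_metric
      proof (intro exI[of _ r0] conjI allI impI)
        show "r0 > 0" by (rule r0)
        fix z :: complex assume "dist z 0 < r0"
        then have z: "cmod z < r0" by simp
        have zb: "z \<in> ball 0 1" using z r0 by simp
        have "cmod z * KX < 1" using z r0 KX by (smt (verit, best) mult_strict_right_mono)
        then have "(\<lambda>n. a n * z ^ n) sums h z" using sums zb by blast
        then show "eval_fps Fp z = h z" by (simp add: eval_fps_def Fp_def sums_iff)
      qed
    qed
    have an: "a n = (deriv ^^ n) h 0 / fact n" using fps_nth_fps_expansion[OF exp, of n] by (simp add: Fp_def)
    have "norm ((deriv ^^ n) h 0) \<le> fact n * (norm y * norm x / Kr) / r ^ n"
    proof (rule Cauchy_inequality)
      show "h holomorphic_on ball 0 r" using hol[of y x] unfolding h_def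
        by (rule holomorphic_on_subset) (use cbr in auto)
      show "continuous_on (cball 0 r) h" using holomorphic_on_imp_continuous_on[OF hol[of y x]] cbr
        unfolding h_def by (rule continuous_on_subset)
      show "0 < r" by (rule r)
      fix w :: complex assume "norm (0 - w) = r"
      then have wc: "w \<in> cball 0 r" by simp
      have "norm (h w) \<le> norm y * norm (R w x)" unfolding h_def by (rule cauchy_schwarz)
      also have "\<dots> \<le> norm y * (norm x / Kr)"
        using Kr(2)[OF wc, of x] Kr(1) by (intro mult_left_mono) (auto simp: field_simps)
      finally show "norm (h w) \<le> norm y * norm x / Kr" by simp
    qed
    then have "cmod (a n) \<le> (norm y * norm x / Kr) / r ^ n"
      unfolding an by (simp add: norm_divide field_simps)
    then show ?thesis by (simp add: a_def)
  qed
  show ?thesis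
  proof (intro exI[of _ "1 / Kr"] allI)
    fix n x
    have c: "cmod (cinner ((X ^^ n) x) ((X ^^ n) x)) \<le> norm ((X ^^ n) x) * norm x / Kr / r ^ n"
      by (rule coef)
    have "(norm ((X ^^ n) x))^2 \<le> norm ((X ^^ n) x) * (norm x / Kr / r ^ n)"
    proof -
      have "cmod (cinner ((X ^^ n) x) ((X ^^ n) x)) = (norm ((X ^^ n) x))^2"
        by (simp add: cinner_self del: of_real_power)
      then show ?thesis using c by simp
    qed
    then have "norm ((X ^^ n) x) * norm ((X ^^ n) x) \<le> (norm x / Kr / r ^ n) * norm ((X ^^ n) x)"
      by (simp add: power2_eq_square mult.commute)
    moreover have "0 \<le> norm x / Kr / r ^ n" using Kr(1) r by simp
    moreover have key: "\<And>a b::real. a * a \<le> b * a \<Longrightarrow> 0 \<le> b \<Longrightarrow> 0 \<le> a \<Longrightarrow> a \<le> b"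
      by (metis less_eq_real_def mult_right_le_imp_le)
    ultimately have "norm ((X ^^ n) x) \<le> norm x / Kr / r ^ n"
      by (metis norm_ge_zero)
    then show "norm ((X ^^ n) x) \<le> 1 / Kr * inverse r ^ n * norm x"
      by (simp add: field_simps power_inverse)
  qed
qed



lemma hypo_step:
  fixes B :: "'a::chilbert \<Rightarrow> 'a"
  assumes A: "is_adjoint B B'" and hyp: "\<And>u. norm (B' u) \<le> norm (B u)"
  shows "(norm ((B ^^ Suc n) x))^2 \<le> norm ((B ^^ n) x) * norm ((B ^^ Suc (Suc n)) x)"
proof -
  have "(norm ((B ^^ Suc n) x))^2 = Re (cinner (B ((B ^^ n) x)) ((B ^^ Suc n) x))"
    by (simp add: cinner_self_Re)
  also have "\<dots> = Re (cinner ((B ^^ n) x) (B' ((B ^^ Suc n) x)))"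
    using A unfolding is_adjoint_def by simp
  also have "\<dots> \<le> cmod (cinner ((B ^^ n) x) (B' ((B ^^ Suc n) x)))" by (rule complex_Re_le_cmod)
  also have "\<dots> \<le> norm ((B ^^ n) x) * norm (B' ((B ^^ Suc n) x))" by (rule cauchy_schwarz)
  also have "\<dots> \<le> norm ((B ^^ n) x) * norm (B ((B ^^ Suc n) x))" by (intro mult_left_mono hyp) auto
  finally show ?thesis by simp
qed

lemma hypo_pow:
  fixes B :: "'a::chilbert \<Rightarrow> 'a"
  assumes B: "bounded_clinear B" and A: "is_adjoint B B'" and hyp: "\<And>u. norm (B' u) \<le> norm (B u)"
  shows "onorm B ^ Suc n \<le> onorm (B ^^ Suc n)"
proof -
  define b where "b k = onorm (B ^^ k)" for k
  have bl: "bounded_linear (B ^^ k)" for k by (rule bclin_bl[OF bclin_funpow[OF B]])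
  have b0: "0 \<le> b k" for k unfolding b_def by (rule onorm_pos_le[OF bl])
  have nb: "norm ((B ^^ k) x) \<le> b k * norm x" for k x unfolding b_def by (rule onorm[OF bl])
  have b1: "b 1 = onorm B" by (simp add: b_def)
  have bid: "b 0 \<le> 1" using onorm_id_le by (simp add: b_def id_def)
  have sq: "(b (Suc n))^2 \<le> b (Suc (Suc n)) * b n" for n
  proof -
    define P where "P = b (Suc (Suc n)) * b n"
    have P0: "0 \<le> P" unfolding P_def using b0 by (intro mult_nonneg_nonneg)
    have sP: "(sqrt P)^2 = P" using P0 by simp
    have bound: "norm ((B ^^ Suc n) x) \<le> sqrt P * norm x" for x
    proof -
      have "(norm ((B ^^ Suc n) x))^2 \<le> norm ((B ^^ n) x) * norm ((B ^^ Suc (Suc n)) x)"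
        by (rule hypo_step[OF A hyp])
      also have "\<dots> \<le> (b n * norm x) * (b (Suc (Suc n)) * norm x)"
        by (rule mult_mono[OF nb nb]) (simp_all add: b0 mult_nonneg_nonneg)
      also have "\<dots> = P * (norm x)^2" by (simp add: P_def power2_eq_square)
      also have "\<dots> = (sqrt P * norm x)^2" by (simp only: power_mult_distrib sP)
      finally have "(norm ((B ^^ Suc n) x))^2 \<le> (sqrt P * norm x)^2" .
      moreover have "0 \<le> sqrt P * norm x" using P0 by simp
      ultimately show ?thesis by (rule power2_le_imp_le)
    qed
    have "onorm (B ^^ Suc n) \<le> sqrt P" by (rule onorm_bound) (use P0 bound in simp_all)
    then have "b (Suc n) \<le> sqrt P" by (simp add: b_def)
    then have "(b (Suc n))^2 \<le> (sqrt P)^2" using b0 by (intro power_mono) auto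
    then show ?thesis using sP by (simp add: P_def)
  qed
  have comp: "b (Suc k) \<le> b 1 * b k" for k
  proof -
    have "b (Suc k) = onorm (B \<circ> (B ^^ k))" by (simp add: b_def)
    also have "\<dots> \<le> onorm B * onorm (B ^^ k)" by (rule onorm_compose[OF bclin_bl[OF B] bl])
    finally show ?thesis by (simp add: b_def)
  qed
  have Q: "b 1 * b (Suc n) \<le> b (Suc (Suc n))" for n
  proof (induction n)
    case 0
    have "(b 1)^2 \<le> b 2 * b 0" using sq[of 0] by (simp add: numeral_2_eq_2)
    also have "\<dots> \<le> b 2" using bid b0[of 2] by (simp add: mult_left_le)
    finally show ?case by (simp add: power2_eq_square numeral_2_eq_2)
  next
    case (Suc n)
    show ?case
    proof (cases "b (Suc n) = 0")
      case True
      then have "b (Suc (Suc n)) = 0" using comp[of "Suc n"] b0[of "Suc (Suc n)"] by simp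
      then show ?thesis using b0 by simp
    next
      case False
      then have pos: "b (Suc n) > 0" using b0[of "Suc n"] by simp
      have "b 1 * b (Suc (Suc n)) * b (Suc n) \<le> b (Suc (Suc n)) * b (Suc (Suc n))"
        using mult_right_mono[OF Suc.IH b0[of "Suc (Suc n)"]] by (simp add: algebra_simps)
      also have "\<dots> \<le> b (Suc (Suc (Suc n))) * b (Suc n)" using sq[of "Suc n"] by (simp add: power2_eq_square)
      finally show ?thesis using pos by (simp add: mult_le_cancel_right)
    qed
  qed
  have "b 1 ^ Suc n \<le> b (Suc n)" for n
  proof (induction n)
    case 0 then show ?case by simp
  next
    case (Suc n)
    have "b 1 ^ Suc (Suc n) = b 1 * b 1 ^ Suc n" by simp
    also have "\<dots> \<le> b 1 * b (Suc n)" using Suc b0[of 1] by (intro mult_left_mono) auto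
    also have "\<dots> \<le> b (Suc (Suc n))" by (rule Q)
    finally show ?case .
  qed
  then show ?thesis using b1 by (simp add: b_def)
qed

lemma pow_bound_le:
  fixes q p K :: real
  assumes "\<And>n. q ^ Suc n \<le> K * p ^ Suc n" "p > 0" "q \<ge> 0"
  shows "q \<le> p"
proof (rule ccontr)
  assume "\<not> q \<le> p"
  then have qp: "1 < q / p" using assms by simp
  obtain n where n: "K < (q / p) ^ n" using real_arch_pow[OF qp] by blast
  have "(q / p) ^ n \<le> (q / p) ^ Suc n" using qp by (intro power_increasing) auto
  also have "\<dots> = q ^ Suc n / p ^ Suc n" by (simp add: power_divide)
  also have "\<dots> \<le> K" using assms(1)[of n] assms(2) by (simp add: divide_le_eq)
  finally show False using n by simp
qed

lemma onorm_le_one: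
  fixes X :: "'a::chilbert \<Rightarrow> 'a"
  assumes X: "bounded_clinear X" and B: "bounded_clinear B" and AB: "is_adjoint B X"
    and hyp: "\<And>u. norm (X u) \<le> norm (B u)"
    and inv: "\<And>lam. 1 < cmod lam \<Longrightarrow> surj (\<lambda>x. X x - lam *\<^sub>C x) \<and> (\<exists>c>0. \<forall>x. c * norm x \<le> norm (X x - lam *\<^sub>C x))"
  shows "onorm X \<le> 1"
proof -
  have AX: "is_adjoint X B" using adj_sym[OF AB] .
  have blX: "bounded_linear (X ^^ k)" for k by (rule bclin_bl[OF bclin_funpow[OF X]])
  have blB: "bounded_linear (B ^^ k)" for k by (rule bclin_bl[OF bclin_funpow[OF B]])
  have XB: "onorm X \<le> onorm B"
  proof (rule onorm_bound)
    show "0 \<le> onorm B" by (rule onorm_pos_le[OF bclin_bl[OF B]])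
    show "norm (X x) \<le> onorm B * norm x" for x
      by (rule adj_norm[OF AB]) (rule onorm[OF bclin_bl[OF B]])
  qed
  have BX: "onorm (B ^^ k) \<le> onorm (X ^^ k)" for k
  proof (rule onorm_bound)
    show "0 \<le> onorm (X ^^ k)" by (rule onorm_pos_le[OF blX])
    show "norm ((B ^^ k) x) \<le> onorm (X ^^ k) * norm x" for x
      by (rule adj_norm[OF adj_funpow[OF AX]]) (rule onorm[OF blX])
  qed
  have "onorm X \<le> inverse r" if r: "0 < r" "r < 1" for r
  proof -
    obtain K where K: "\<And>n x. norm ((X ^^ n) x) \<le> K * (inverse r) ^ n * norm x"
      using growth_bound[OF X inv r] by blast
    have "onorm (X ^^ n) \<le> max K 0 * (inverse r) ^ n" for n
    proof (rule onorm_bound)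
      show "0 \<le> max K 0 * inverse r ^ n" using r by simp
      show "norm ((X ^^ n) x) \<le> max K 0 * inverse r ^ n * norm x" for x
        using K[of n x] r by (smt (verit, best) max.cobounded1 mult_right_mono norm_ge_zero zero_le_power inverse_nonnegative_iff_nonnegative)
    qed
    have "onorm X ^ Suc n \<le> max K 0 * (inverse r) ^ Suc n" for n
    proof -
      have "onorm X ^ Suc n \<le> onorm B ^ Suc n"
        using XB onorm_pos_le[OF bclin_bl[OF X]] by (intro power_mono) auto
      also have "\<dots> \<le> onorm (B ^^ Suc n)" by (rule hypo_pow[OF B AB hyp])
      also have "\<dots> \<le> onorm (X ^^ Suc n)" by (rule BX)
      also have "\<dots> \<le> max K 0 * (inverse r) ^ Suc n" by fact
      finally show ?thesis .
    qed
    then show ?thesis by (rule pow_bound_le) (use r onorm_pos_le[OF bclin_bl[OF X]] in auto)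
  qed
  then show ?thesis
  proof -
    assume h: "\<And>r. 0 < r \<Longrightarrow> r < 1 \<Longrightarrow> onorm X \<le> inverse r"
    show ?thesis
    proof (rule ccontr)
      assume "\<not> onorm X \<le> 1"
      then have o1: "onorm X > 1" by simp
      define r where "r = 2 / (1 + onorm X)"
      have "0 < r" "r < 1" using o1 by (auto simp: r_def field_simps)
      from h[OF this] have "onorm X \<le> (1 + onorm X) / 2" by (simp add: r_def)
      then show False using o1 by simp
    qed
  qed
qed

lemma isometry_inner:
  fixes T :: "'a::chilbert \<Rightarrow> 'a"
  assumes T: "bounded_clinear T" and iso: "\<And>x. norm (T x) = norm x"
  shows "cinner (T x) (T z) = cinner x z"
proof -
  have re: "Re (cinner (T a) (T b)) = Re (cinner a b)" for a b
    using norm_sq_add[of "T a" "T b"] norm_sq_add[of a b] iso[of "a + b"] iso[of a] iso[of b]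
    by (simp add: bclin_add[OF T])
  have "Re (cinner (T x) (T (\<i> *\<^sub>C z))) = Re (cinner x (\<i> *\<^sub>C z))" by (rule re)
  then have im: "Im (cinner (T x) (T z)) = Im (cinner x z)"
    by (simp add: bclin_scale[OF T] cinner_cscale_right)
  show ?thesis using re[of x z] im by (simp add: complex_eq_iff)
qed

lemma part1:
  fixes T :: "'a::chilbert \<Rightarrow> 'a"
  assumes T: "bounded_clinear T" and ap: "ap_spec T \<subseteq> sphere 0 1"
    and hyp: "hyponormal_on (Hu' T) (Tprime T)" and inv: "invertible_op T"
  shows "unitary_op T"
proof -
  obtain S where S: "bounded_clinear S" and ST0: "S \<circ> T = id" and TS0: "T \<circ> S = id"
    using inv unfolding invertible_op_def by blast
  have ST: "S (T x) = x" for x using fun_cong[OF ST0, of x] by simp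
  have TS: "T (S x) = x" for x using fun_cong[OF TS0, of x] by simp
  define A where "A = adj T"
  have TA: "is_adjoint T A" unfolding A_def by (rule adj_is_adjoint[OF T])
  have Ab: "bounded_clinear A" by (rule adj_bclin[OF T TA])
  define S' where "S' = adj S"
  have SS': "is_adjoint S S'" unfolding S'_def by (rule adj_is_adjoint[OF S])
  have S'b: "bounded_clinear S'" by (rule adj_bclin[OF S SS'])
  have S'A: "S' (A y) = y" for y
  proof (rule cinner_same_imp_eq)
    fix x
    have "cinner x (S' (A y)) = cinner (S x) (A y)" using SS' unfolding is_adjoint_def by simp
    also have "\<dots> = cinner (T (S x)) y" using TA unfolding is_adjoint_def by simp
    finally show "cinner x (S' (A y)) = cinner x y" by (simp add: TS)
  qed
  have AS': "A (S' y) = y" for y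
  proof (rule cinner_same_imp_eq)
    fix x
    have "cinner x (A (S' y)) = cinner (T x) (S' y)" using TA unfolding is_adjoint_def by simp
    also have "\<dots> = cinner (S (T x)) y" using SS' unfolding is_adjoint_def by simp
    finally show "cinner x (A (S' y)) = cinner x y" by (simp add: ST)
  qed
  define W where "W = S \<circ> S'"
  have Wb: "bounded_clinear W" unfolding W_def by (rule bclin_comp[OF S S'b])
  have W1: "W \<circ> (adj T \<circ> T) = id" by (rule ext) (simp add: W_def A_def[symmetric] S'A ST)
  have W2: "(adj T \<circ> T) \<circ> W = id" by (rule ext) (simp add: W_def A_def[symmetric] TS AS')
  define W' where "W' = op_inv (adj T \<circ> T)"
  have "bounded_clinear W' \<and> W' \<circ> (adj T \<circ> T) = id \<and> (adj T \<circ> T) \<circ> W' = id"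
    unfolding W'_def op_inv_def by (rule someI[of _ W]) (use Wb W1 W2 in blast)
  then have W'1: "W' \<circ> (adj T \<circ> T) = id" by blast
  have WW: "W' = W"
  proof (rule ext)
    fix x
    have "W' x = W' ((adj T \<circ> T) (W x))" using fun_cong[OF W2, of x] by simp
    also have "\<dots> = W x" using fun_cong[OF W'1, of "W x"] by simp
    finally show "W' x = W x" .
  qed
  have TP: "Tprime T = S'"
    by (rule ext) (simp add: Tprime_def W'_def[symmetric] WW W_def TS)
  have sS': "surj (S' ^^ n)" for n
  proof (induction n)
    case 0 then show ?case by simp
  next
    case (Suc n)
    show ?case unfolding surj_def
    proof
      fix y
      obtain z where "A y = (S' ^^ n) z" using Suc unfolding surj_def by blast
      then have "(S' ^^ Suc n) z = y" by (metis S'A comp_apply funpow.simps(2))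
      then show "\<exists>x. y = (S' ^^ Suc n) x" by metis
    qed
  qed
  have HU: "Hu' T = UNIV" unfolding Hu'_def TP using sS' by auto
  obtain R where R: "is_adjoint_on UNIV S' R"
    and pos: "\<And>x. 0 \<le> Re (cinner x (R (S' x) - S' (R x)))"
    using hyp unfolding hyponormal_on_def HU TP by blast
  have S'R: "is_adjoint S' R" using R unfolding is_adjoint_on_def is_adjoint_def by simp
  have S'S: "is_adjoint S' S" by (rule adj_sym[OF SS'])
  have RS: "R = S" by (rule adj_unique[OF S'R S'S])
  have hypS: "norm (S x) \<le> norm (S' x)" for x
  proof -
    have e1: "cinner x (S (S' x)) = cinner (S' x) (S' x)" using S'S unfolding is_adjoint_def by simp
    have e2: "cinner (S' (S x)) x = cinner (S x) (S x)"
      using S'S unfolding is_adjoint_def by simp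
    have e3: "Re (cinner x (S' (S x))) = Re (cinner (S' (S x)) x)"
      by (subst cinner_cnj) simp
    have "0 \<le> Re (cinner x (S (S' x)) - cinner x (S' (S x)))"
      using pos[of x] by (simp add: RS cinner_diff_right)
    then have "0 \<le> Re (cinner (S' x) (S' x)) - Re (cinner (S x) (S x))"
      by (simp only: e1 minus_complex.sel(1) e3 e2)
    then have "(norm (S x))^2 \<le> (norm (S' x))^2" by (simp only: cinner_self_Re)
    then show ?thesis using power2_le_imp_le norm_ge_zero by blast
  qed
  have hypT: "norm (T u) \<le> norm (A u)" for u
  proof -
    have adjZ: "is_adjoint (S \<circ> A) (T \<circ> S')" by (rule adj_comp[OF SS' adj_sym[OF TA]])
    have "norm ((T \<circ> S') y) \<le> 1 * norm y" for y
    proof (rule adj_norm[OF adjZ])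
      fix w show "norm ((S \<circ> A) w) \<le> 1 * norm w" using hypS[of "A w"] by (simp add: S'A)
    qed
    from this[of "A u"] show ?thesis by (simp add: S'A)
  qed
  have specT: "surj (\<lambda>x. T x - mu *\<^sub>C x) \<and> (\<exists>c>0. \<forall>x. c * norm x \<le> norm (T x - mu *\<^sub>C x))"
    if "cmod mu \<noteq> 1" for mu
  proof (rule spec_T[OF T ap _ that])
    show "surj T" unfolding surj_def
    proof
      fix y show "\<exists>x. y = T x" using TS[of y] by (intro exI[of _ "S y"]) simp
    qed
  qed
  have oT: "onorm T \<le> 1"
  proof (rule onorm_le_one[OF T Ab adj_sym[OF TA] hypT])
    fix lam :: complex assume "1 < cmod lam"
    then show "surj (\<lambda>x. T x - lam *\<^sub>C x) \<and> (\<exists>c>0. \<forall>x. c * norm x \<le> norm (T x - lam *\<^sub>C x))"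
      using specT by simp
  qed
  have oS: "onorm S \<le> 1"
  proof (rule onorm_le_one[OF S S'b S'S hypS])
    fix lam :: complex assume "1 < cmod lam"
    then show "surj (\<lambda>x. S x - lam *\<^sub>C x) \<and> (\<exists>c>0. \<forall>x. c * norm x \<le> norm (S x - lam *\<^sub>C x))"
      using spec_inv[OF T S ST TS specT] by blast
  qed
  have iso: "norm (T x) = norm x" for x
  proof (rule antisym)
    show "norm (T x) \<le> norm x"
      using onorm[OF bclin_bl[OF T], of x] mult_right_mono[OF oT norm_ge_zero[of x]] by simp
    have "norm (S (T x)) \<le> norm (T x)"
      using onorm[OF bclin_bl[OF S], of "T x"] mult_right_mono[OF oS norm_ge_zero[of "T x"]] by simp
    then show "norm x \<le> norm (T x)" by (simp add: ST)
  qed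
  have AT: "A (T z) = z" for z
  proof (rule cinner_same_imp_eq)
    fix x
    have "cinner x (A (T z)) = cinner (T x) (T z)" using TA unfolding is_adjoint_def by simp
    then show "cinner x (A (T z)) = cinner x z" by (simp add: isometry_inner[OF T iso])
  qed
  have TA': "T (A z) = z" for z
  proof -
    have "T (A z) = T (A (T (S z)))" by (simp add: TS)
    also have "\<dots> = z" using AT[of "S z"] TS[of z] by simp
    finally show ?thesis .
  qed
  show ?thesis unfolding unitary_op_def A_def[symmetric]
    by (auto simp: fun_eq_iff AT TA')
qed

theorem proposition2p4:
  fixes T :: "'a::chilbert \<Rightarrow> 'a"
  assumes "bounded_clinear T"
    and "ap_spec T \<subseteq> sphere 0 1"
    and "hyponormal_on (Hu' T) (Tprime T)"
  shows "(invertible_op T \<longrightarrow> unitary_op T) \<and> (analytic_op T \<longrightarrow> completely_nonnormal T)"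
  using part1[OF assms] part2[OF assms(1,2)] by blast


end
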